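(* Let $b>0$ and $0\le\omega<\pi^2$ be constants and let $\mathcal{A}$ be the global attractor of the multivalued semiflow $G$ generated by the autonomous problem (P). Then $\mathcal{A}$ is compact in $V^{2r}$ for every $0\le r<1$.
   Context: $H=L^2(0,1)$, $V=H_0^1(0,1)$, $A=-d^2/dx^2$ with $D(A)=H^2(0,1)\cap V$, $V^{2r}=D(A^r)$ (domain of the fractional power, with the norm $\|A^r\cdot\|$). $H_0(s)=\{-1\}$ ($s<0$), $[-1,1]$ ($s=0$), $\{1\}$ ($s>0$). Problem (P): $\partial_t u-\partial_{xx}u\in bH_0(u)+\omega u$ on $(0,\infty)\times(0,1)$, Dirichlet conditions, $u(0)=u_0\in H$. A solution is $u\in C([0,\infty),H)$ with $u(0)=u_0$, absolutely continuous on each $[T_1,T_2]$, $0<T_1<T_2$, $u(t)\in D(A)$ a.e., and there is $r\in L^2_{loc}(0,\infty;H)$ with $r(t)(x)\in bH_0(u(t)(x))+\omega u(t)(x)$ a.e. and $du/dt+Au=r$ a.e. $G(t,u_0)=\{u(t): u \text{ solution with } u(0)=u_0\}$. The global attractor (known to exist) is the compact set $\mathcal{A}\subset H$ with $G(t,\mathcal{A})=\mathcal{A}$ for all $t\ge0$ and $\sup_{y\in G(t,B)}\operatorname{dist}_H(y,\mathcal{A})\to0$ as $t\to\infty$ for every bounded $B\subset H$. *)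

theory Defs
  imports "HOL-Analysis.Analysis"
begin

(* Elements of H = L^2(0,1) are represented by functions real => real;
   equality in H is equality up to the L^2 seminorm (i.e. a.e.). *)

definition inH :: "(real \<Rightarrow> real) \<Rightarrow> bool" where
  "inH f \<longleftrightarrow> f \<in> borel_measurable (lebesgue_on {0..1})
          \<and> integrable (lebesgue_on {0..1}) (\<lambda>x. (f x)\<^sup>2)"

definition hnorm :: "(real \<Rightarrow> real) \<Rightarrow> real" where
  "hnorm f = sqrt (integral\<^sup>L (lebesgue_on {0..1}) (\<lambda>x. (f x)\<^sup>2))"

definition hdist :: "(real \<Rightarrow> real) \<Rightarrow> (real \<Rightarrow> real) \<Rightarrow> real" where
  "hdist f g = hnorm (\<lambda>x. f x - g x)"

(* sine coefficients w.r.t. the orthonormal eigenbasis e_k = sqrt 2 sin(k pi x), k = Suc j *)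
definition coef :: "(real \<Rightarrow> real) \<Rightarrow> nat \<Rightarrow> real" where
  "coef f j = sqrt 2 * integral\<^sup>L (lebesgue_on {0..1}) (\<lambda>x. f x * sin (real (Suc j) * pi * x))"

(* eigenvalues of A = -d^2/dx^2 with Dirichlet conditions *)
definition lam :: "nat \<Rightarrow> real" where
  "lam j = (real (Suc j) * pi)\<^sup>2"

(* V^{2r} = D(A^r) (spectral definition of the fractional power) and its norm |A^r .| *)
definition inDA :: "real \<Rightarrow> (real \<Rightarrow> real) \<Rightarrow> bool" where
  "inDA r f \<longleftrightarrow> inH f \<and> summable (\<lambda>j. lam j powr (2 * r) * (coef f j)\<^sup>2)"

definition Arnorm :: "real \<Rightarrow> (real \<Rightarrow> real) \<Rightarrow> real" where
  "Arnorm r f = sqrt (\<Sum>j. lam j powr (2 * r) * (coef f j)\<^sup>2)"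

definition isA :: "(real \<Rightarrow> real) \<Rightarrow> (real \<Rightarrow> real) \<Rightarrow> bool" where
  "isA u g \<longleftrightarrow> inDA 1 u \<and> inH g \<and> (\<forall>j. coef g j = lam j * coef u j)"

definition H0 :: "real \<Rightarrow> real set" where
  "H0 s = (if s < 0 then {-1} else if s = 0 then {-1..1} else {1})"

definition hderiv :: "(real \<Rightarrow> real \<Rightarrow> real) \<Rightarrow> real \<Rightarrow> (real \<Rightarrow> real) \<Rightarrow> bool" where
  "hderiv u t w \<longleftrightarrow> inH w \<and>
     ((\<lambda>h. hdist (\<lambda>x. (u (t + h) x - u t x) / h) w) \<longlongrightarrow> 0) (at 0)"

definition hcont :: "(real \<Rightarrow> real \<Rightarrow> real) \<Rightarrow> bool" where
  "hcont u \<longleftrightarrow> (\<forall>t\<ge>0. inH (u t)) \<and>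
     (\<forall>t\<ge>0. \<forall>e>0. \<exists>d>0. \<forall>s\<ge>0. \<bar>s - t\<bar> < d \<longrightarrow> hdist (u s) (u t) < e)"

definition habscont :: "(real \<Rightarrow> real \<Rightarrow> real) \<Rightarrow> real \<Rightarrow> real \<Rightarrow> bool" where
  "habscont u T1 T2 \<longleftrightarrow> (\<forall>e>0. \<exists>d>0. \<forall>(n::nat) (a::nat \<Rightarrow> real) (b::nat \<Rightarrow> real).
      (\<forall>i<n. T1 \<le> a i \<and> a i \<le> b i \<and> b i \<le> T2) \<and>
      (\<forall>i<n. \<forall>j<n. i \<noteq> j \<longrightarrow> b i \<le> a j \<or> b j \<le> a i) \<and>
      (\<Sum>i<n. b i - a i) < d
      \<longrightarrow> (\<Sum>i<n. hdist (u (b i)) (u (a i))) < e)"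

(* r in L^2_loc(0,infinity; H): weakly (hence strongly, H separable) measurable,
   with square norm integrable on every [0,T] *)
definition L2loc :: "(real \<Rightarrow> real \<Rightarrow> real) \<Rightarrow> bool" where
  "L2loc r \<longleftrightarrow> (AE t in lebesgue_on {0<..}. inH (r t)) \<and>
     (\<forall>phi. inH phi \<longrightarrow>
        (\<lambda>t. integral\<^sup>L (lebesgue_on {0..1}) (\<lambda>x. r t x * phi x)) \<in> borel_measurable (lebesgue_on {0<..})) \<and>
     (\<forall>T>0. set_integrable lebesgue {0..T} (\<lambda>t. (hnorm (r t))\<^sup>2))"

definition solP :: "real \<Rightarrow> real \<Rightarrow> (real \<Rightarrow> real) \<Rightarrow> (real \<Rightarrow> real \<Rightarrow> real) \<Rightarrow> bool" where
  "solP b \<omega> u0 u \<longleftrightarrow>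
     hcont u \<and> hdist (u 0) u0 = 0 \<and>
     (\<forall>T1 T2. 0 < T1 \<and> T1 < T2 \<longrightarrow> habscont u T1 T2) \<and>
     (AE t in lebesgue_on {0<..}. inDA 1 (u t)) \<and>
     (\<exists>r. L2loc r \<and>
        (AE t in lebesgue_on {0<..}. AE x in lebesgue_on {0..1}.
            r t x \<in> {b * s + \<omega> * u t x | s. s \<in> H0 (u t x)}) \<and>
        (AE t in lebesgue_on {0<..}. \<exists>w g. hderiv u t w \<and> isA (u t) g \<and>
            hdist (\<lambda>x. w x + g x) (r t) = 0))"

(* G(t,u0), as a subset of H (closed under a.e. equality) *)
definition Gmap :: "real \<Rightarrow> real \<Rightarrow> real \<Rightarrow> (real \<Rightarrow> real) \<Rightarrow> (real \<Rightarrow> real) set" where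
  "Gmap b \<omega> t u0 = {v. inH v \<and> (\<exists>u. solP b \<omega> u0 u \<and> hdist v (u t) = 0)}"

definition Gset :: "real \<Rightarrow> real \<Rightarrow> real \<Rightarrow> (real \<Rightarrow> real) set \<Rightarrow> (real \<Rightarrow> real) set" where
  "Gset b \<omega> t B = (\<Union>u0\<in>B. Gmap b \<omega> t u0)"

definition hbounded :: "(real \<Rightarrow> real) set \<Rightarrow> bool" where
  "hbounded B \<longleftrightarrow> (\<forall>f\<in>B. inH f) \<and> (\<exists>M. \<forall>f\<in>B. hnorm f \<le> M)"

definition Hcompact :: "(real \<Rightarrow> real) set \<Rightarrow> bool" where
  "Hcompact K \<longleftrightarrow> (\<forall>f\<in>K. inH f) \<and>
     (\<forall>s::nat \<Rightarrow> real \<Rightarrow> real. (\<forall>n. s n \<in> K) \<longrightarrow>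
        (\<exists>a\<in>K. \<exists>\<sigma>::nat \<Rightarrow> nat. strict_mono \<sigma> \<and> (\<lambda>n. hdist (s (\<sigma> n)) a) \<longlonglongrightarrow> 0))"

definition Vcompact :: "real \<Rightarrow> (real \<Rightarrow> real) set \<Rightarrow> bool" where
  "Vcompact r K \<longleftrightarrow> (\<forall>f\<in>K. inDA r f) \<and>
     (\<forall>s::nat \<Rightarrow> real \<Rightarrow> real. (\<forall>n. s n \<in> K) \<longrightarrow>
        (\<exists>a\<in>K. \<exists>\<sigma>::nat \<Rightarrow> nat. strict_mono \<sigma> \<and>
           (\<lambda>n. Arnorm r (\<lambda>x. s (\<sigma> n) x - a x)) \<longlonglongrightarrow> 0))"

definition global_attractor :: "real \<Rightarrow> real \<Rightarrow> (real \<Rightarrow> real) set \<Rightarrow> bool" where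
  "global_attractor b \<omega> K \<longleftrightarrow> Hcompact K \<and>
     (\<forall>t\<ge>0. Gset b \<omega> t K = K) \<and>
     (\<forall>B. hbounded B \<longrightarrow>
        (\<forall>e>0. \<exists>T. \<forall>t\<ge>T. \<forall>y\<in>Gset b \<omega> t B. \<exists>a\<in>K. hdist y a < e))"

end

theory Submission
  imports Defs
begin

abbreviation "M01 \<equiv> lebesgue_on {0..1::real}"

lemma fin01: "finite_measure M01"
  by (rule finite_measure_lebesgue_on) auto

lemma integrable_bdd01:
  fixes f :: "real \<Rightarrow> real"
  assumes "f \<in> borel_measurable M01" "\<And>x. x \<in> {0..1} \<Longrightarrow> \<bar>f x\<bar> \<le> B"
  shows "integrable M01 f"
proof -
  have "AE x in M01. norm (f x) \<le> B"
    using assms(2) by (intro AE_I2) (auto simp: space_restrict_space)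
  then show ?thesis
    using finite_measure.integrable_const_bound[OF fin01, of f B] assms(1) by auto
qed

lemma inH_meas: "inH f \<Longrightarrow> f \<in> borel_measurable M01"
  by (simp add: inH_def)

lemma inH_sq: "inH f \<Longrightarrow> integrable M01 (\<lambda>x. (f x)\<^sup>2)"
  by (simp add: inH_def)

lemma inH_prod:
  assumes "inH f" "inH g"
  shows "integrable M01 (\<lambda>x. f x * g x)"
proof (rule Bochner_Integration.integrable_bound[where f="\<lambda>x. (f x)\<^sup>2 + (g x)\<^sup>2"])
  show "integrable M01 (\<lambda>x. (f x)\<^sup>2 + (g x)\<^sup>2)"
    using assms by (auto simp: inH_def)
  show "(\<lambda>x. f x * g x) \<in> borel_measurable M01"
    using assms by (auto simp: inH_def)
  show "AE x in M01. norm (f x * g x) \<le> norm ((f x)\<^sup>2 + (g x)\<^sup>2)"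
  proof (intro AE_I2)
    fix x
    have "0 \<le> (\<bar>f x\<bar> - \<bar>g x\<bar>)\<^sup>2" by simp
    then have "2 * (\<bar>f x\<bar> * \<bar>g x\<bar>) \<le> (f x)\<^sup>2 + (g x)\<^sup>2"
      by (simp add: power2_eq_square algebra_simps)
    moreover have "0 \<le> \<bar>f x\<bar> * \<bar>g x\<bar>" by simp
    moreover have "norm (f x * g x) = \<bar>f x\<bar> * \<bar>g x\<bar>" by (simp add: abs_mult)
    moreover have "norm ((f x)\<^sup>2 + (g x)\<^sup>2) = (f x)\<^sup>2 + (g x)\<^sup>2" by simp
    ultimately show "norm (f x * g x) \<le> norm ((f x)\<^sup>2 + (g x)\<^sup>2)"
      by linarith
  qed
qed

lemma inH_lin:
  assumes "inH f" "inH g"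
  shows "inH (\<lambda>x. a * f x + c * g x)"
  unfolding inH_def
proof
  show "(\<lambda>x. a * f x + c * g x) \<in> borel_measurable M01"
    using assms by (auto simp: inH_def)
  show "integrable M01 (\<lambda>x. (a * f x + c * g x)\<^sup>2)"
  proof (rule Bochner_Integration.integrable_bound[where f="\<lambda>x. 2*a\<^sup>2*(f x)\<^sup>2 + 2*c\<^sup>2*(g x)\<^sup>2"])
    show "integrable M01 (\<lambda>x. 2*a\<^sup>2*(f x)\<^sup>2 + 2*c\<^sup>2*(g x)\<^sup>2)"
      using assms by (auto simp: inH_def)
    show "(\<lambda>x. (a * f x + c * g x)\<^sup>2) \<in> borel_measurable M01"
      using assms by (auto simp: inH_def)
    show "AE x in M01. norm ((a * f x + c * g x)\<^sup>2) \<le> norm (2*a\<^sup>2*(f x)\<^sup>2 + 2*c\<^sup>2*(g x)\<^sup>2)"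
    proof (intro AE_I2)
      fix x
      have "(a * f x + c * g x)\<^sup>2 \<le> 2*a\<^sup>2*(f x)\<^sup>2 + 2*c\<^sup>2*(g x)\<^sup>2"
      proof -
        have "0 \<le> (a * f x - c * g x)\<^sup>2" by simp
        then show ?thesis by (simp add: power2_eq_square algebra_simps)
      qed
      then show "norm ((a * f x + c * g x)\<^sup>2) \<le> norm (2*a\<^sup>2*(f x)\<^sup>2 + 2*c\<^sup>2*(g x)\<^sup>2)"
        by simp
    qed
  qed
qed

lemma inH_sin: "inH (\<lambda>x. sin (k * x))"
  unfolding inH_def
proof
  show "(\<lambda>x. sin (k * x)) \<in> borel_measurable M01"
    by (intro continuous_imp_measurable_on_sets_lebesgue) (auto intro!: continuous_intros)
  show "integrable M01 (\<lambda>x. (sin (k * x))\<^sup>2)"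
    by (rule integrable_bdd01[where B=1])
       (auto intro!: continuous_imp_measurable_on_sets_lebesgue continuous_intros simp: abs_square_le_1)
qed


lemma inH_diff: "inH f \<Longrightarrow> inH g \<Longrightarrow> inH (\<lambda>x. f x - g x)"
  using inH_lin[of f g 1 "-1"] by simp

lemma inH_add: "inH f \<Longrightarrow> inH g \<Longrightarrow> inH (\<lambda>x. f x + g x)"
  using inH_lin[of f g 1 1] by simp

lemma inH_scale: "inH f \<Longrightarrow> inH (\<lambda>x. a * f x)"
  using inH_lin[of f f a 0] by simp

lemma inH_zero: "inH (\<lambda>x. 0)"
  by (simp add: inH_def)

lemma hnorm_sq: "(hnorm f)\<^sup>2 = integral\<^sup>L M01 (\<lambda>x. (f x)\<^sup>2)"
proof -
  have "0 \<le> integral\<^sup>L M01 (\<lambda>x. (f x)\<^sup>2)" by (rule integral_nonneg_AE) auto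
  then show ?thesis by (simp add: hnorm_def)
qed

lemma hnorm_nonneg: "0 \<le> hnorm f"
  by (simp add: hnorm_def)

lemma CS01:
  assumes f: "inH f" and g: "inH g"
  shows "(integral\<^sup>L M01 (\<lambda>x. f x * g x))\<^sup>2
         \<le> integral\<^sup>L M01 (\<lambda>x. (f x)\<^sup>2) * integral\<^sup>L M01 (\<lambda>x. (g x)\<^sup>2)"
proof -
  define A where "A = integral\<^sup>L M01 (\<lambda>x. (f x)\<^sup>2)"
  define B where "B = integral\<^sup>L M01 (\<lambda>x. f x * g x)"
  define C where "C = integral\<^sup>L M01 (\<lambda>x. (g x)\<^sup>2)"
  have iA: "integrable M01 (\<lambda>x. (f x)\<^sup>2)" and iC: "integrable M01 (\<lambda>x. (g x)\<^sup>2)"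
    using f g by (auto simp: inH_def)
  have iB: "integrable M01 (\<lambda>x. f x * g x)" using inH_prod[OF f g] .
  have Q: "0 \<le> t\<^sup>2 * A - 2 * t * B + C" for t
  proof -
    have "0 \<le> integral\<^sup>L M01 (\<lambda>x. (t * f x - g x)\<^sup>2)"
      by (rule integral_nonneg_AE) auto
    also have "(\<lambda>x. (t * f x - g x)\<^sup>2) = (\<lambda>x. t\<^sup>2 * (f x)\<^sup>2 - 2 * t * (f x * g x) + (g x)\<^sup>2)"
      by (auto simp: power2_eq_square algebra_simps)
    also have "integral\<^sup>L M01 \<dots> = t\<^sup>2 * A - 2 * t * B + C"
      using iA iB iC by (simp add: A_def B_def C_def)
    finally show ?thesis .
  qed
  have A0: "0 \<le> A" unfolding A_def by (rule integral_nonneg_AE) auto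
  show ?thesis
  proof (cases "A = 0")
    case True
    have "B = 0"
    proof (rule ccontr)
      assume "B \<noteq> 0"
      have "0 \<le> ((C + 1) / (2 * B))\<^sup>2 * A - 2 * ((C + 1) / (2 * B)) * B + C" by (rule Q)
      with True \<open>B \<noteq> 0\<close> show False by (simp add: field_simps)
    qed
    then show ?thesis using True by (simp add: A_def[symmetric] B_def[symmetric])
  next
    case False
    then have Ap: "A > 0" using A0 by simp
    have "0 \<le> (B / A)\<^sup>2 * A - 2 * (B / A) * B + C" by (rule Q)
    also have "\<dots> = C - B\<^sup>2 / A" using Ap by (simp add: power2_eq_square field_simps)
    finally have "B\<^sup>2 / A \<le> C" by simp
    then have "B\<^sup>2 \<le> A * C" using Ap by (simp add: field_simps)
    then show ?thesis by (simp add: A_def B_def C_def)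
  qed
qed

abbreviation ef :: "nat \<Rightarrow> real \<Rightarrow> real" where
  "ef j x \<equiv> sin (real (Suc j) * pi * x)"

lemma inH_ef: "inH (ef j)"
  using inH_sin[of "real (Suc j) * pi"] by simp

lemma int_ef_sq_le: "integral\<^sup>L M01 (\<lambda>x. (ef j x)\<^sup>2) \<le> 1"
proof -
  have "integral\<^sup>L M01 (\<lambda>x. (ef j x)\<^sup>2) \<le> integral\<^sup>L M01 (\<lambda>x. 1)"
    by (rule integral_mono) (use inH_ef[of j] in \<open>auto simp: inH_def abs_square_le_1\<close>)
  also have "\<dots> = 1" by (simp add: measure_restrict_space)
  finally show ?thesis .
qed

lemma coef_sq_le: "inH f \<Longrightarrow> (coef f j)\<^sup>2 \<le> 2 * (hnorm f)\<^sup>2"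
proof -
  assume f: "inH f"
  have "(coef f j)\<^sup>2 = 2 * (integral\<^sup>L M01 (\<lambda>x. f x * ef j x))\<^sup>2"
    by (simp add: coef_def power_mult_distrib)
  also have "\<dots> \<le> 2 * (integral\<^sup>L M01 (\<lambda>x. (f x)\<^sup>2) * integral\<^sup>L M01 (\<lambda>x. (ef j x)\<^sup>2))"
    using CS01[OF f inH_ef[of j]] by simp
  also have "\<dots> \<le> 2 * (integral\<^sup>L M01 (\<lambda>x. (f x)\<^sup>2) * 1)"
    using int_ef_sq_le[of j] integral_nonneg_AE[of "\<lambda>x. (f x)\<^sup>2" M01]
    by (intro mult_left_mono mult_left_mono) auto
  finally show ?thesis by (simp add: hnorm_sq)
qed

lemma coef_lin:
  assumes "inH f" "inH g"
  shows "coef (\<lambda>x. a * f x + c * g x) j = a * coef f j + c * coef g j"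
proof -
  have i1: "integrable M01 (\<lambda>x. f x * ef j x)" "integrable M01 (\<lambda>x. g x * ef j x)"
    using inH_prod[OF assms(1) inH_ef] inH_prod[OF assms(2) inH_ef] by auto
  have "(\<lambda>x. (a * f x + c * g x) * ef j x) = (\<lambda>x. a * (f x * ef j x) + c * (g x * ef j x))"
    by (auto simp: algebra_simps)
  then show ?thesis using i1 by (simp add: coef_def algebra_simps)
qed

lemma coef_diff: "inH f \<Longrightarrow> inH g \<Longrightarrow> coef (\<lambda>x. f x - g x) j = coef f j - coef g j"
  using coef_lin[of f g 1 "-1" j] by simp

lemma coef_add: "inH f \<Longrightarrow> inH g \<Longrightarrow> coef (\<lambda>x. f x + g x) j = coef f j + coef g j"
  using coef_lin[of f g 1 1 j] by simp

lemma coef_hdist: "inH f \<Longrightarrow> inH g \<Longrightarrow> (coef f j - coef g j)\<^sup>2 \<le> 2 * (hdist f g)\<^sup>2"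
  using coef_sq_le[OF inH_diff, of f g j] by (simp add: coef_diff hdist_def)

lemma coef_hdist0: "inH f \<Longrightarrow> inH g \<Longrightarrow> hdist f g = 0 \<Longrightarrow> coef f j = coef g j"
  using coef_hdist[of f g j] by simp

lemma coef_abs_le: "inH f \<Longrightarrow> inH g \<Longrightarrow> \<bar>coef f j - coef g j\<bar> \<le> sqrt 2 * hdist f g"
proof -
  assume "inH f" "inH g"
  from coef_hdist[OF this, of j] have "sqrt ((coef f j - coef g j)\<^sup>2) \<le> sqrt (2 * (hdist f g)\<^sup>2)"
    by (rule real_sqrt_le_mono)
  moreover have "0 \<le> hdist f g" by (simp add: hdist_def hnorm_nonneg)
  ultimately show ?thesis by (simp add: real_sqrt_mult)
qed

lemma cont_integrable:
  fixes f :: "real \<Rightarrow> real"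
  assumes "continuous_on {a..b} f"
  shows "integrable (lebesgue_on {a..b}) f"
proof -
  have "bounded (f ` {a..b})"
    using compact_imp_bounded[OF compact_continuous_image[OF assms compact_Icc]] .
  then obtain B where "\<forall>y\<in>f ` {a..b}. norm y \<le> B"
    unfolding bounded_iff by blast
  then have B: "\<And>x. x \<in> {a..b} \<Longrightarrow> norm (f x) \<le> B" by blast
  have fm: "finite_measure (lebesgue_on {a..b})"
    by (rule finite_measure_lebesgue_on) auto
  have "AE x in lebesgue_on {a..b}. norm (f x) \<le> B"
    using B by (intro AE_I2) auto
  moreover have "f \<in> borel_measurable (lebesgue_on {a..b})"
    by (intro continuous_imp_measurable_on_sets_lebesgue assms) auto
  ultimately show ?thesis
    using finite_measure.integrable_const_bound[OF fm] by blast
qed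

lemma cont_lint:
  fixes f :: "real \<Rightarrow> real"
  assumes "continuous_on {a..b} f" "(f has_integral I) {a..b}"
  shows "integral\<^sup>L (lebesgue_on {a..b}) f = I"
proof -
  have "(f has_integral (integral\<^sup>L (lebesgue_on {a..b}) f)) {a..b}"
    by (rule has_integral_integral_lebesgue_on[OF cont_integrable[OF assms(1)]]) auto
  then show ?thesis using assms(2) by (rule has_integral_unique)
qed

lemma int_cos:
  fixes k :: real
  assumes "k \<noteq> 0"
  shows "integral\<^sup>L M01 (\<lambda>x. cos (k * x)) = sin k / k"
proof (rule cont_lint)
  show "continuous_on {0..1} (\<lambda>x. cos (k * x))" by (intro continuous_intros)
  have "((\<lambda>x. cos (k * x)) has_integral (sin (k * 1) / k - sin (k * 0) / k)) {0..1}"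
  proof (rule fundamental_theorem_of_calculus)
    fix x :: real
    have "((\<lambda>x. sin (k * x) / k) has_real_derivative cos (k * x)) (at x within {0..1})"
      using assms by (auto intro!: derivative_eq_intros)
    then show "((\<lambda>x. sin (k * x) / k) has_vector_derivative cos (k * x)) (at x within {0..1})"
      by (simp add: has_real_derivative_iff_has_vector_derivative)
  qed simp
  then show "((\<lambda>x. cos (k * x)) has_integral sin k / k) {0..1}" by simp
qed

lemma int_cos_pi:
  fixes z :: real
  assumes "z \<in> \<int>" "z \<noteq> 0"
  shows "integral\<^sup>L M01 (\<lambda>x. cos (z * pi * x)) = 0"
proof -
  have "integral\<^sup>L M01 (\<lambda>x. cos ((z * pi) * x)) = sin (z * pi) / (z * pi)"
    using assms by (intro int_cos) auto
  also have "sin (z * pi) = 0" using assms(1) by (simp add: sin_times_pi_eq_0)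
  finally show ?thesis by simp
qed

lemma ef_prod:
  "ef i x * ef j x = (cos ((real (Suc i) - real (Suc j)) * pi * x)
                      - cos ((real (Suc i) + real (Suc j)) * pi * x)) / 2"
  by (simp add: sin_times_sin algebra_simps)

lemma ef_prod_cont: "continuous_on {0..1} (\<lambda>x. ef i x * ef j x)"
  by (intro continuous_intros)

lemma ef_ortho:
  "integral\<^sup>L M01 (\<lambda>x. ef i x * ef j x) = (if i = j then 1/2 else 0)"
proof -
  have c1: "integrable M01 (\<lambda>x. cos ((real (Suc i) - real (Suc j)) * pi * x))"
    by (intro cont_integrable continuous_intros)
  have c2: "integrable M01 (\<lambda>x. cos ((real (Suc i) + real (Suc j)) * pi * x))"
    by (intro cont_integrable continuous_intros)
  have "integral\<^sup>L M01 (\<lambda>x. ef i x * ef j x) =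
      (integral\<^sup>L M01 (\<lambda>x. cos ((real (Suc i) - real (Suc j)) * pi * x))
       - integral\<^sup>L M01 (\<lambda>x. cos ((real (Suc i) + real (Suc j)) * pi * x))) / 2"
    unfolding ef_prod using c1 c2 by simp
  also have "integral\<^sup>L M01 (\<lambda>x. cos ((real (Suc i) + real (Suc j)) * pi * x)) = 0"
    by (rule int_cos_pi) auto
  also have "integral\<^sup>L M01 (\<lambda>x. cos ((real (Suc i) - real (Suc j)) * pi * x))
             = (if i = j then 1 else 0)"
  proof (cases "i = j")
    case True
    then show ?thesis by (simp add: measure_restrict_space)
  next
    case False
    have "real (Suc i) - real (Suc j) \<in> \<int>"
      by (metis Ints_diff Ints_of_nat)
    moreover have "real (Suc i) - real (Suc j) \<noteq> 0" using False by simp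
    ultimately show ?thesis using False by (simp add: int_cos_pi)
  qed
  finally show ?thesis by (cases "i = j") simp_all
qed

lemma bessel:
  assumes f: "inH f"
  shows "(\<Sum>j<N. (coef f j)\<^sup>2) \<le> (hnorm f)\<^sup>2"
proof -
  define c where "c j = coef f j" for j
  define S where "S x = (\<Sum>j<N. c j * sqrt 2 * ef j x)" for x
  have ife: "integrable M01 (\<lambda>x. f x * ef j x)" for j
    using inH_prod[OF f inH_ef] .
  have iee: "integrable M01 (\<lambda>x. ef i x * ef j x)" for i j
    by (intro cont_integrable continuous_intros)
  have cj: "c j = sqrt 2 * integral\<^sup>L M01 (\<lambda>x. f x * ef j x)" for j
    by (simp add: c_def coef_def)
  have i1: "integral\<^sup>L M01 (\<lambda>x. f x * S x) = (\<Sum>j<N. (c j)\<^sup>2)"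
  proof -
    have "(\<lambda>x. f x * S x) = (\<lambda>x. \<Sum>j<N. c j * sqrt 2 * (f x * ef j x))"
      by (auto simp: S_def sum_distrib_left algebra_simps)
    then have "integral\<^sup>L M01 (\<lambda>x. f x * S x) = (\<Sum>j<N. c j * sqrt 2 * integral\<^sup>L M01 (\<lambda>x. f x * ef j x))"
      using ife by (simp add: integral_sum)
    also have "\<dots> = (\<Sum>j<N. (c j)\<^sup>2)"
      by (intro sum.cong refl) (simp add: cj power2_eq_square)
    finally show ?thesis .
  qed
  have i2: "integral\<^sup>L M01 (\<lambda>x. (S x)\<^sup>2) = (\<Sum>j<N. (c j)\<^sup>2)"
  proof -
    have "(\<lambda>x. (S x)\<^sup>2) = (\<lambda>x. \<Sum>i<N. \<Sum>j<N. (2 * c i * c j) * (ef i x * ef j x))"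
      by (auto simp: S_def power2_eq_square sum_product algebra_simps intro!: sum.cong)
    then have "integral\<^sup>L M01 (\<lambda>x. (S x)\<^sup>2)
        = (\<Sum>i<N. \<Sum>j<N. (2 * c i * c j) * integral\<^sup>L M01 (\<lambda>x. ef i x * ef j x))"
      using iee by (simp add: integral_sum)
    also have "\<dots> = (\<Sum>i<N. \<Sum>j<N. if i = j then (c i)\<^sup>2 else 0)"
      by (intro sum.cong refl) (simp only: ef_ortho, auto simp: power2_eq_square)
    also have "\<dots> = (\<Sum>i<N. (c i)\<^sup>2)"
      by (intro sum.cong refl) simp
    finally show ?thesis .
  qed
  have iS: "integrable M01 (\<lambda>x. f x * S x)"
  proof -
    have "(\<lambda>x. f x * S x) = (\<lambda>x. \<Sum>j<N. c j * sqrt 2 * (f x * ef j x))"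
      by (auto simp: S_def sum_distrib_left algebra_simps)
    then show ?thesis using ife by simp
  qed
  have iS2: "integrable M01 (\<lambda>x. (S x)\<^sup>2)"
  proof -
    have "(\<lambda>x. (S x)\<^sup>2) = (\<lambda>x. \<Sum>i<N. \<Sum>j<N. (2 * c i * c j) * (ef i x * ef j x))"
      by (auto simp: S_def power2_eq_square sum_product algebra_simps intro!: sum.cong)
    then show ?thesis using iee by simp
  qed
  have "0 \<le> integral\<^sup>L M01 (\<lambda>x. (f x - S x)\<^sup>2)"
    by (rule integral_nonneg_AE) auto
  also have "(\<lambda>x. (f x - S x)\<^sup>2) = (\<lambda>x. (f x)\<^sup>2 - 2 * (f x * S x) + (S x)\<^sup>2)"
    by (auto simp: power2_eq_square algebra_simps)
  also have "integral\<^sup>L M01 \<dots> = integral\<^sup>L M01 (\<lambda>x. (f x)\<^sup>2) - 2 * (\<Sum>j<N. (c j)\<^sup>2) + (\<Sum>j<N. (c j)\<^sup>2)"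
    using inH_sq[OF f] iS iS2 i1 i2 by simp
  finally show ?thesis by (simp add: hnorm_sq c_def)
qed

lemma ftc_ac:
  fixes \<phi> f :: "real \<Rightarrow> real" and N :: "real set"
  assumes ab: "a \<le> b"
    and AC: "\<And>e. e > 0 \<Longrightarrow> \<exists>d>0. \<forall>D. D division_of \<Union>D \<and> \<Union>D \<subseteq> {a..b} \<and> sum Henstock_Kurzweil_Integration.content D < d
                 \<longrightarrow> (\<Sum>K\<in>D. \<bar>\<phi> (Sup K) - \<phi> (Inf K)\<bar>) < e"
    and N: "negligible N"
    and der: "\<And>t. t \<in> {a..b} \<Longrightarrow> t \<notin> N \<Longrightarrow> (\<phi> has_real_derivative f t) (at t within {a..b})"
  shows "((\<lambda>t. if t \<in> N then 0 else f t) has_integral (\<phi> b - \<phi> a)) {a..b}"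
proof -
  define g where "g t = (if t \<in> N then 0 else f t)" for t
  have "(g has_integral (\<phi> b - \<phi> a)) (cbox a b)"
    unfolding has_integral
  proof (intro allI impI)
    fix e :: real
    assume e: "e > 0"
    define \<epsilon> where "\<epsilon> = e / (2 * (b - a + 1))"
    have \<epsilon>: "\<epsilon> > 0" using e ab by (simp add: \<epsilon>_def)
    have \<epsilon>ba: "\<epsilon> * (b - a) < e / 2"
    proof -
      have "\<epsilon> * (b - a) < \<epsilon> * (b - a + 1)" using \<epsilon> by simp
      also have "\<epsilon> * (b - a + 1) = e / 2" using ab by (simp add: \<epsilon>_def field_simps)
      finally show ?thesis .
    qed
    obtain d0 where d0: "d0 > 0" and
      d0AC: "\<And>D. D division_of \<Union>D \<Longrightarrow> \<Union>D \<subseteq> {a..b} \<Longrightarrow> sum Henstock_Kurzweil_Integration.content D < d0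
                 \<Longrightarrow> (\<Sum>K\<in>D. \<bar>\<phi> (Sup K) - \<phi> (Inf K)\<bar>) < e / 2"
      using AC[of "e/2"] e by auto
    have Nsets: "N \<in> sets lebesgue" using N by (rule negligible_imp_sets)
    obtain Op where Op: "open Op" "N \<subseteq> Op" "(Op - N) \<in> lmeasurable" "emeasure lebesgue (Op - N) < ennreal d0"
      using sets_lebesgue_outer_open[OF Nsets d0] by blast
    have ONmeas: "(Op - N) \<union> N \<in> lmeasurable"
      using fmeasurable.Un[OF Op(3) negligible_imp_measurable[OF N]] .
    have measON: "measure lebesgue ((Op - N) \<union> N) < d0"
    proof -
      have "measure lebesgue ((Op - N) \<union> N) \<le> measure lebesgue (Op - N) + measure lebesgue N"
        using Op(3) Nsets by (intro measure_Un_le) auto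
      also have "measure lebesgue N = 0" using N by (simp add: negligible_imp_measure0)
      also have "measure lebesgue (Op - N) < d0"
      proof -
        have "emeasure lebesgue (Op - N) = ennreal (measure lebesgue (Op - N))"
          using Op(3) by (simp add: emeasure_eq_measure2)
        then have "ennreal (measure lebesgue (Op - N)) < ennreal d0" using Op(4) by simp
        then show ?thesis by (simp add: ennreal_less_iff)
      qed
      finally show ?thesis by simp
    qed
    have ex: "\<exists>\<delta>>0. (t \<in> N \<longrightarrow> ball t \<delta> \<subseteq> Op) \<and>
               (t \<in> {a..b} \<and> t \<notin> N \<longrightarrow> (\<forall>y\<in>{a..b}. \<bar>y - t\<bar> < \<delta> \<longrightarrow>
                   \<bar>\<phi> y - \<phi> t - f t * (y - t)\<bar> \<le> \<epsilon> * \<bar>y - t\<bar>))" for t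
    proof (cases "t \<in> N")
      case True
      then obtain \<delta> where "\<delta> > 0" "ball t \<delta> \<subseteq> Op"
        using Op(1,2) open_contains_ball by blast
      then show ?thesis using True by blast
    next
      case False
      show ?thesis
      proof (cases "t \<in> {a..b}")
        case True
        have "(\<phi> has_derivative (\<lambda>h. f t * h)) (at t within {a..b})"
          using der[OF True False] by (simp add: has_field_derivative_def)
        then obtain \<delta> where "\<delta> > 0" and
          "\<forall>y\<in>{a..b}. norm (y - t) < \<delta> \<longrightarrow> norm (\<phi> y - \<phi> t - f t * (y - t)) \<le> \<epsilon> * norm (y - t)"
          using \<epsilon> unfolding has_derivative_within_alt by blast
        then show ?thesis using False by auto
      next
        case False
        then show ?thesis using \<open>t \<notin> N\<close> by (intro exI[of _ 1]) auto
      qed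
    qed
    then obtain \<delta> where \<delta>: "\<And>t. \<delta> t > 0"
      and \<delta>N: "\<And>t. t \<in> N \<Longrightarrow> ball t (\<delta> t) \<subseteq> Op"
      and \<delta>D: "\<And>t y. t \<in> {a..b} \<Longrightarrow> t \<notin> N \<Longrightarrow> y \<in> {a..b} \<Longrightarrow> \<bar>y - t\<bar> < \<delta> t \<Longrightarrow>
                   \<bar>\<phi> y - \<phi> t - f t * (y - t)\<bar> \<le> \<epsilon> * \<bar>y - t\<bar>"
      by metis
    define \<gamma> where "\<gamma> t = ball t (\<delta> t)" for t
    have g\<gamma>: "gauge \<gamma>" using \<delta> by (auto simp: gauge_def \<gamma>_def)
    have main: "norm ((\<Sum>(x, k)\<in>p. Henstock_Kurzweil_Integration.content k *\<^sub>R g x) - (\<phi> b - \<phi> a)) < e"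
      if p: "p tagged_division_of (cbox a b)" and fine: "\<gamma> fine p" for p
    proof -
      have p': "p tagged_division_of {a..b}" using p by simp
      note pD = tagged_division_ofD[OF p']
      have fin: "finite p" using pD(1) .
      have intv: "\<exists>u v. K = {u..v} \<and> u \<le> v \<and> x \<in> {u..v} \<and> {u..v} \<subseteq> {a..b} \<and> {u..v} \<subseteq> ball x (\<delta> x)"
        if xKp: "(x, K) \<in> p" for x K
      proof -
        obtain u v where K: "K = cbox u v" using pD(4)[OF xKp] by blast
        have "x \<in> K" using pD(2)[OF xKp] .
        then have "u \<le> v" using K by auto
        moreover have "K \<subseteq> ball x (\<delta> x)" using fine xKp by (auto simp: fine_def \<gamma>_def)
        ultimately show ?thesis using K pD(3)[OF xKp] \<open>x \<in> K\<close> by auto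
      qed
      define T where "T = (\<lambda>(x::real, K::real set). Henstock_Kurzweil_Integration.content K * g x - (\<phi> (Sup K) - \<phi> (Inf K)))"
      have eq1: "(\<Sum>(x, k)\<in>p. Henstock_Kurzweil_Integration.content k *\<^sub>R g x) - (\<phi> b - \<phi> a) = sum T p"
      proof -
        have "sum (\<lambda>(x,K). \<phi>(Sup K) - \<phi>(Inf K)) p = \<phi> b - \<phi> a"
          by (rule additive_tagged_division_1[OF ab p'])
        then show ?thesis
          by (simp add: T_def sum_subtractf split_def)
      qed
      define p1 where "p1 = {xK \<in> p. fst xK \<notin> N}"
      define p2 where "p2 = {xK \<in> p. fst xK \<in> N}"
      have p12: "p = p1 \<union> p2" "p1 \<inter> p2 = {}" "finite p1" "finite p2"
        using fin by (auto simp: p1_def p2_def)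
      have "\<bar>sum T p\<bar> \<le> sum (\<lambda>xK. \<bar>T xK\<bar>) p" by (rule sum_abs)
      also have "\<dots> = sum (\<lambda>xK. \<bar>T xK\<bar>) p1 + sum (\<lambda>xK. \<bar>T xK\<bar>) p2"
        using p12 by (simp add: sum.union_disjoint)
      also have "sum (\<lambda>xK. \<bar>T xK\<bar>) p1 \<le> sum (\<lambda>(x,K). \<epsilon> * Henstock_Kurzweil_Integration.content K) p1"
      proof (rule sum_mono)
        fix xK assume "xK \<in> p1"
        then obtain x K where xK: "xK = (x, K)" "(x, K) \<in> p" "x \<notin> N"
          by (cases xK) (auto simp: p1_def)
        obtain u v where uv: "K = {u..v}" "u \<le> v" "x \<in> {u..v}" "{u..v} \<subseteq> {a..b}" "{u..v} \<subseteq> ball x (\<delta> x)"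
          using intv[OF xK(2)] by blast
        have xab: "x \<in> {a..b}" using uv by auto
        have "u \<in> {u..v}" "v \<in> {u..v}" using uv by auto
        then have "u \<in> ball x (\<delta> x)" "v \<in> ball x (\<delta> x)" using uv(5) by blast+
        then have du: "\<bar>u - x\<bar> < \<delta> x" and dv: "\<bar>v - x\<bar> < \<delta> x"
          by (auto simp: dist_real_def abs_minus_commute)
        have "u \<in> {a..b}" "v \<in> {a..b}" using uv by auto
        have Eu: "\<bar>\<phi> u - \<phi> x - f x * (u - x)\<bar> \<le> \<epsilon> * \<bar>u - x\<bar>"
          using \<delta>D[OF xab xK(3) \<open>u \<in> {a..b}\<close> du] .
        have Ev: "\<bar>\<phi> v - \<phi> x - f x * (v - x)\<bar> \<le> \<epsilon> * \<bar>v - x\<bar>"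
          using \<delta>D[OF xab xK(3) \<open>v \<in> {a..b}\<close> dv] .
        have SI: "Sup K = v" "Inf K = u" using uv by auto
        have ct: "Henstock_Kurzweil_Integration.content K = v - u" using uv by simp
        have "T xK = (v - u) * f x - (\<phi> v - \<phi> u)"
          using xK(3) by (simp add: T_def xK(1) SI ct g_def)
        also have "\<dots> = - (\<phi> v - \<phi> x - f x * (v - x)) + (\<phi> u - \<phi> x - f x * (u - x))"
          by (simp add: algebra_simps)
        finally have "\<bar>T xK\<bar> \<le> \<epsilon> * \<bar>v - x\<bar> + \<epsilon> * \<bar>u - x\<bar>"
          using Eu Ev by linarith
        also have "\<dots> = \<epsilon> * (v - u)" using uv(3) by (simp add: algebra_simps)
        finally show "\<bar>T xK\<bar> \<le> (case xK of (x, K) \<Rightarrow> \<epsilon> * Henstock_Kurzweil_Integration.content K)"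
          by (simp add: xK(1) ct)
      qed
      also have "sum (\<lambda>(x,K). \<epsilon> * Henstock_Kurzweil_Integration.content K) p1 \<le> sum (\<lambda>(x,K). \<epsilon> * Henstock_Kurzweil_Integration.content K) p"
        using p12 \<epsilon> fin by (intro sum_mono2) (auto simp: p1_def)
      also have "\<dots> = \<epsilon> * (b - a)"
      proof -
        have "sum (\<lambda>(x,K). Henstock_Kurzweil_Integration.content K) p = Henstock_Kurzweil_Integration.content (cbox a b)"
          by (rule additive_content_tagged_division[OF p])
        then show ?thesis using ab by (simp add: sum_distrib_left[symmetric] split_def)
      qed
      also have "sum (\<lambda>xK. \<bar>T xK\<bar>) p2 < e / 2"
      proof -
        define d where "d K = (if K = {} then 0 else \<bar>\<phi> (Sup K) - \<phi> (Inf K)\<bar>)" for K :: "real set"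
        have p2part: "p2 tagged_partial_division_of {a..b}"
          using tagged_partial_division_subset[of p "{a..b}" p2] p' by (auto simp: tagged_division_of_def p2_def)
        have p2div: "p2 tagged_division_of \<Union>(snd ` p2)"
          by (rule tagged_partial_division_of_Union_self[OF p2part])
        have T2: "sum (\<lambda>xK. \<bar>T xK\<bar>) p2 = sum (\<lambda>(x,K). d K) p2"
        proof (rule sum.cong[OF refl])
          fix xK assume "xK \<in> p2"
          then obtain x K where xK: "xK = (x, K)" "(x, K) \<in> p" "x \<in> N"
            by (cases xK) (auto simp: p2_def)
          have "K \<noteq> {}" using pD(2)[OF xK(2)] by auto
          then show "\<bar>T xK\<bar> = (case xK of (x, K) \<Rightarrow> d K)"
            using xK by (simp add: T_def g_def d_def abs_minus_commute)
        qed
        also have "\<dots> = sum d (snd ` p2)"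
        proof (rule sum.over_tagged_division_lemma[OF p2div])
          fix u v :: real
          assume "box u v = {}"
          then have "v \<le> u" by simp
          then show "d (cbox u v) = 0"
            by (cases "v < u") (auto simp: d_def)
        qed
        also have "\<dots> = (\<Sum>K\<in>snd ` p2. \<bar>\<phi> (Sup K) - \<phi> (Inf K)\<bar>)"
        proof (rule sum.cong[OF refl])
          fix K assume "K \<in> snd ` p2"
          then obtain x where "(x, K) \<in> p" by (auto simp: p2_def)
          then have "K \<noteq> {}" using pD(2) by auto
          then show "d K = \<bar>\<phi> (Sup K) - \<phi> (Inf K)\<bar>" by (simp add: d_def)
        qed
        also have "\<dots> < e / 2"
        proof (rule d0AC)
          show D2: "snd ` p2 division_of \<Union>(snd ` p2)"
            by (rule partial_division_of_tagged_division[OF p2part])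
          show "\<Union>(snd ` p2) \<subseteq> {a..b}" using pD(3) by (force simp: p2_def)
          have sub: "\<Union>(snd ` p2) \<subseteq> (Op - N) \<union> N"
          proof
            fix y assume "y \<in> \<Union>(snd ` p2)"
            then obtain x K where "(x, K) \<in> p" "x \<in> N" "y \<in> K" by (auto simp: p2_def)
            then have "y \<in> ball x (\<delta> x)" using fine unfolding fine_def \<gamma>_def by blast
            then have "y \<in> Op" using \<delta>N[OF \<open>x \<in> N\<close>] by auto
            then show "y \<in> (Op - N) \<union> N" by auto
          qed
          have "sum Henstock_Kurzweil_Integration.content (snd ` p2) = (\<Sum>K\<in>snd ` p2. measure lebesgue K)"
          proof (rule sum.cong[OF refl])
            fix K assume "K \<in> snd ` p2"
            then obtain x where "(x, K) \<in> p" by (auto simp: p2_def)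
            then obtain u v where "K = cbox u v" using pD(4) by blast
            then show "Henstock_Kurzweil_Integration.content K = measure lebesgue K"
              by (simp add: measure_completion)
          qed
          also have "\<dots> = measure lebesgue (\<Union>(snd ` p2))"
            by (rule content_division[OF D2])
          also have "\<dots> \<le> measure lebesgue ((Op - N) \<union> N)"
            by (rule measure_mono_fmeasurable[OF sub]) (use lmeasurable_division[OF D2] ONmeas in auto)
          also have "\<dots> < d0" by (rule measON)
          finally show "sum Henstock_Kurzweil_Integration.content (snd ` p2) < d0" .
        qed
        finally show ?thesis .
      qed
      finally have "\<bar>sum T p\<bar> < e" using \<epsilon>ba by linarith
      then show ?thesis using eq1 by simp
    qed
    show "\<exists>\<gamma>. gauge \<gamma> \<and> (\<forall>\<D>. \<D> tagged_division_of cbox a b \<and> \<gamma> fine \<D> \<longrightarrow>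
              norm ((\<Sum>(x, k)\<in>\<D>. Henstock_Kurzweil_Integration.content k *\<^sub>R g x) - (\<phi> b - \<phi> a)) < e)"
    proof (intro exI[of _ \<gamma>] conjI allI impI)
      show "gauge \<gamma>" by (rule g\<gamma>)
      fix D assume "D tagged_division_of cbox a b \<and> \<gamma> fine D"
      then show "norm ((\<Sum>(x, k)\<in>D. Henstock_Kurzweil_Integration.content k *\<^sub>R g x) - (\<phi> b - \<phi> a)) < e"
        using main by blast
    qed
  qed
  then show ?thesis by (simp add: g_def[abs_def])
qed

abbreviation cnt :: "real set \<Rightarrow> real" where
  "cnt \<equiv> Henstock_Kurzweil_Integration.content"

definition acf :: "(real \<Rightarrow> real) \<Rightarrow> real \<Rightarrow> real \<Rightarrow> bool" where
  "acf \<phi> a b \<longleftrightarrow> (\<forall>e>0. \<exists>d>0. \<forall>D. D division_of \<Union>D \<and> \<Union>D \<subseteq> {a..b} \<and> sum cnt D < d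
       \<longrightarrow> (\<Sum>K\<in>D. \<bar>\<phi> (Sup K) - \<phi> (Inf K)\<bar>) < e)"

lemma div_interval:
  assumes "D division_of S" "K \<in> D"
  shows "\<exists>\<alpha> \<beta>. K = {\<alpha>..\<beta>} \<and> \<alpha> \<le> \<beta> \<and> Sup K = \<beta> \<and> Inf K = \<alpha> \<and> cnt K = \<beta> - \<alpha>"
proof -
  obtain \<alpha> \<beta> where K: "K = cbox \<alpha> \<beta>" using division_ofD(4)[OF assms] by blast
  have "K \<noteq> {}" using division_ofD(3)[OF assms] .
  then have "\<alpha> \<le> \<beta>" using K by auto
  then show ?thesis using K by auto
qed

lemma acf_mult:
  assumes ac: "acf c a b"
    and EB: "\<And>t. t \<in> {a..b} \<Longrightarrow> \<bar>E t\<bar> \<le> BE"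
    and cB: "\<And>t. t \<in> {a..b} \<Longrightarrow> \<bar>c t\<bar> \<le> Bc"
    and EL: "\<And>s t. s \<in> {a..b} \<Longrightarrow> t \<in> {a..b} \<Longrightarrow> \<bar>E t - E s\<bar> \<le> L * \<bar>t - s\<bar>"
    and pos: "0 \<le> L" "0 \<le> Bc" "0 \<le> BE"
  shows "acf (\<lambda>t. E t * c t) a b"
  unfolding acf_def
proof (intro allI impI)
  fix e :: real assume e: "e > 0"
  obtain d1 where d1: "d1 > 0" and
    d1P: "\<And>D. D division_of \<Union>D \<Longrightarrow> \<Union>D \<subseteq> {a..b} \<Longrightarrow> sum cnt D < d1
          \<Longrightarrow> (\<Sum>K\<in>D. \<bar>c (Sup K) - c (Inf K)\<bar>) < e / (2 * (BE + 1))"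
  proof -
    have "e / (2 * (BE + 1)) > 0" using e pos by simp
    then show ?thesis using ac that unfolding acf_def by blast
  qed
  define d where "d = min d1 (e / (2 * (Bc * L + 1)))"
  have BL: "0 \<le> Bc * L" using pos by simp
  have "0 < Bc * L + 1" using BL by linarith
  then have "0 < 2 * (Bc * L + 1)" by simp
  then have "0 < e / (2 * (Bc * L + 1))" using e by (rule divide_pos_pos[rotated])
  then have d: "d > 0" using d1 by (simp add: d_def)
  have "(\<Sum>K\<in>D. \<bar>E (Sup K) * c (Sup K) - E (Inf K) * c (Inf K)\<bar>) < e"
    if D: "D division_of \<Union>D" "\<Union>D \<subseteq> {a..b}" "sum cnt D < d" for D
  proof -
    have fin: "finite D" using D(1) by (rule division_of_finite)
    have pt: "\<bar>E (Sup K) * c (Sup K) - E (Inf K) * c (Inf K)\<bar>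
              \<le> BE * \<bar>c (Sup K) - c (Inf K)\<bar> + (Bc * L) * cnt K" if K: "K \<in> D" for K
    proof -
      obtain \<alpha> \<beta> where ab: "K = {\<alpha>..\<beta>}" "\<alpha> \<le> \<beta>" "Sup K = \<beta>" "Inf K = \<alpha>" "cnt K = \<beta> - \<alpha>"
        using div_interval[OF D(1) K] by blast
      have "\<alpha> \<in> K" "\<beta> \<in> K" using ab by auto
      moreover have "K \<subseteq> {a..b}" using D(2) K by blast
      ultimately have in1: "\<alpha> \<in> {a..b}" "\<beta> \<in> {a..b}" by blast+
      have "E \<beta> * c \<beta> - E \<alpha> * c \<alpha> = E \<beta> * (c \<beta> - c \<alpha>) + c \<alpha> * (E \<beta> - E \<alpha>)"
        by (simp add: algebra_simps)
      then have "\<bar>E \<beta> * c \<beta> - E \<alpha> * c \<alpha>\<bar> \<le> \<bar>E \<beta>\<bar> * \<bar>c \<beta> - c \<alpha>\<bar> + \<bar>c \<alpha>\<bar> * \<bar>E \<beta> - E \<alpha>\<bar>"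
        by (simp add: abs_mult[symmetric] abs_triangle_ineq)
      also have "\<dots> \<le> BE * \<bar>c \<beta> - c \<alpha>\<bar> + Bc * (L * \<bar>\<beta> - \<alpha>\<bar>)"
        using EB[OF in1(2)] cB[OF in1(1)] EL[OF in1(1) in1(2)] pos
        by (intro add_mono mult_mono) auto
      finally show ?thesis using ab by simp
    qed
    have "(\<Sum>K\<in>D. \<bar>E (Sup K) * c (Sup K) - E (Inf K) * c (Inf K)\<bar>)
          \<le> (\<Sum>K\<in>D. BE * \<bar>c (Sup K) - c (Inf K)\<bar> + (Bc * L) * cnt K)"
      using pt by (rule sum_mono)
    also have "\<dots> = BE * (\<Sum>K\<in>D. \<bar>c (Sup K) - c (Inf K)\<bar>) + (Bc * L) * sum cnt D"
      by (simp add: sum.distrib sum_distrib_left)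
    also have "BE * (\<Sum>K\<in>D. \<bar>c (Sup K) - c (Inf K)\<bar>) \<le> BE * (e / (2 * (BE + 1)))"
      using d1P[OF D(1) D(2)] D(3) pos by (intro mult_left_mono) (auto simp: d_def)
    also have "\<dots> \<le> e / 2"
      using pos e by (simp add: field_simps)
    also have "(Bc * L) * sum cnt D \<le> (Bc * L) * (e / (2 * (Bc * L + 1)))"
      using D(3) pos by (intro mult_left_mono) (auto simp: d_def)
    also have "\<dots> < e / 2"
    proof -
      have p1: "0 < Bc * L + 1" using BL by linarith
      then have "(Bc * L) / (Bc * L + 1) < 1" by simp
      then have "(e / 2) * ((Bc * L) / (Bc * L + 1)) < (e / 2) * 1"
        by (rule mult_strict_left_mono) (use e in simp)
      then have "(e / 2) * ((Bc * L) / (Bc * L + 1)) < e / 2" by simp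
      moreover have "(Bc * L) * (e / (2 * (Bc * L + 1))) = (e / 2) * ((Bc * L) / (Bc * L + 1))"
        using p1 by (simp add: field_simps)
      ultimately show ?thesis by linarith
    qed
    finally show ?thesis by simp
  qed
  then show "\<exists>d>0. \<forall>D. D division_of \<Union>D \<and> \<Union>D \<subseteq> {a..b} \<and> sum cnt D < d \<longrightarrow>
             (\<Sum>K\<in>D. \<bar>E (Sup K) * c (Sup K) - E (Inf K) * c (Inf K)\<bar>) < e"
    using d by blast
qed

lemma acf_habscont:
  assumes hc: "habscont u a b" and inh: "\<And>t. t \<in> {a..b} \<Longrightarrow> inH (u t)"
  shows "acf (\<lambda>t. coef (u t) j) a b"
  unfolding acf_def
proof (intro allI impI)
  fix e :: real assume e: "e > 0"
  have e2: "e / 2 > 0" using e by simp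
  have "\<exists>d>0. \<forall>(n::nat) (A::nat \<Rightarrow> real) (B::nat \<Rightarrow> real).
      (\<forall>i<n. a \<le> A i \<and> A i \<le> B i \<and> B i \<le> b) \<and>
      (\<forall>i<n. \<forall>j<n. i \<noteq> j \<longrightarrow> B i \<le> A j \<or> B j \<le> A i) \<and>
      (\<Sum>i<n. B i - A i) < d \<longrightarrow> (\<Sum>i<n. hdist (u (B i)) (u (A i))) < e / 2"
    using hc[unfolded habscont_def, THEN spec[of _ "e/2"]] e2 by simp
  then obtain d where d: "d > 0" and dP0: "\<forall>(n::nat) (A::nat \<Rightarrow> real) (B::nat \<Rightarrow> real).
      (\<forall>i<n. a \<le> A i \<and> A i \<le> B i \<and> B i \<le> b) \<and>
      (\<forall>i<n. \<forall>j<n. i \<noteq> j \<longrightarrow> B i \<le> A j \<or> B j \<le> A i) \<and>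
      (\<Sum>i<n. B i - A i) < d \<longrightarrow> (\<Sum>i<n. hdist (u (B i)) (u (A i))) < e / 2"
    by blast
  have "(\<Sum>K\<in>D. \<bar>coef (u (Sup K)) j - coef (u (Inf K)) j\<bar>) < e"
    if D: "D division_of \<Union>D" "\<Union>D \<subseteq> {a..b}" "sum cnt D < d" for D
  proof -
    have fin: "finite D" using D(1) by (rule division_of_finite)
    define D' where "D' = {K \<in> D. cnt K \<noteq> 0}"
    have finD': "finite D'" using fin by (simp add: D'_def)
    have "(\<Sum>K\<in>D. \<bar>coef (u (Sup K)) j - coef (u (Inf K)) j\<bar>) = (\<Sum>K\<in>D'. \<bar>coef (u (Sup K)) j - coef (u (Inf K)) j\<bar>)"
    proof (rule sum.mono_neutral_right[OF fin])
      show "D' \<subseteq> D" by (auto simp: D'_def)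
      show "\<forall>K\<in>D - D'. \<bar>coef (u (Sup K)) j - coef (u (Inf K)) j\<bar> = 0"
      proof
        fix K assume "K \<in> D - D'"
        then have K: "K \<in> D" "cnt K = 0" by (auto simp: D'_def)
        obtain \<alpha> \<beta> where ab: "K = {\<alpha>..\<beta>}" "\<alpha> \<le> \<beta>" "Sup K = \<beta>" "Inf K = \<alpha>" "cnt K = \<beta> - \<alpha>"
          using div_interval[OF D(1) K(1)] by blast
        then show "\<bar>coef (u (Sup K)) j - coef (u (Inf K)) j\<bar> = 0" using K(2) by simp
      qed
    qed
    also obtain h where h: "bij_betw h {0..<card D'} D'" using ex_bij_betw_nat_finite[OF finD'] by blast
    define n where "n = card D'"
    define A where "A i = Inf (h i)" for i
    define B where "B i = Sup (h i)" for i
    have hD: "h i \<in> D" "cnt (h i) \<noteq> 0" if "i < n" for i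
      using h that by (auto simp: bij_betw_def n_def D'_def)
    have hAB: "h i = {A i..B i} \<and> A i < B i \<and> cnt (h i) = B i - A i" if ilt: "i < n" for i
    proof -
      obtain \<alpha> \<beta> where ab: "h i = {\<alpha>..\<beta>}" "\<alpha> \<le> \<beta>" "Sup (h i) = \<beta>" "Inf (h i) = \<alpha>" "cnt (h i) = \<beta> - \<alpha>"
        using div_interval[OF D(1) hD(1)[OF ilt]] by blast
      then show ?thesis using hD(2)[OF ilt] by (auto simp: A_def B_def)
    qed
    have "(\<Sum>K\<in>D'. \<bar>coef (u (Sup K)) j - coef (u (Inf K)) j\<bar>) = (\<Sum>i<n. \<bar>coef (u (B i)) j - coef (u (A i)) j\<bar>)"
      using sum.reindex_bij_betw[OF h, of "\<lambda>K. \<bar>coef (u (Sup K)) j - coef (u (Inf K)) j\<bar>"]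
      by (simp add: A_def B_def n_def atLeast0LessThan)
    also have "\<dots> \<le> (\<Sum>i<n. sqrt 2 * hdist (u (B i)) (u (A i)))"
    proof (rule sum_mono)
      fix i assume "i \<in> {..<n}"
      then have i: "i < n" by simp
      have "A i \<in> h i" "B i \<in> h i" using hAB[OF i] by auto
      then have "A i \<in> {a..b}" "B i \<in> {a..b}" using hD(1)[OF i] D(2) by auto
      then show "\<bar>coef (u (B i)) j - coef (u (A i)) j\<bar> \<le> sqrt 2 * hdist (u (B i)) (u (A i))"
        using coef_abs_le[OF inh inh] by blast
    qed
    also have "\<dots> = sqrt 2 * (\<Sum>i<n. hdist (u (B i)) (u (A i)))"
      by (simp add: sum_distrib_left)
    also have "\<dots> \<le> sqrt 2 * (e / 2)"
    proof -
      have c1: "\<forall>i<n. a \<le> A i \<and> A i \<le> B i \<and> B i \<le> b"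
      proof (intro allI impI)
        fix i assume i: "i < n"
        have "A i \<in> h i" "B i \<in> h i" using hAB[OF i] by auto
        then have "A i \<in> {a..b}" "B i \<in> {a..b}" using hD(1)[OF i] D(2) by auto
        then show "a \<le> A i \<and> A i \<le> B i \<and> B i \<le> b" using hAB[OF i] by auto
      qed
      have c2: "\<forall>i<n. \<forall>k<n. i \<noteq> k \<longrightarrow> B i \<le> A k \<or> B k \<le> A i"
      proof (intro allI impI)
        fix i k assume ik: "i < n" "k < n" "i \<noteq> k"
        have "h i \<noteq> h k" using h ik by (auto simp: bij_betw_def inj_on_def n_def)
        then have disj: "interior (h i) \<inter> interior (h k) = {}"
          using division_ofD(5)[OF D(1) hD(1)[OF ik(1)] hD(1)[OF ik(2)]] by blast
        show "B i \<le> A k \<or> B k \<le> A i"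
        proof (rule ccontr)
          assume "\<not> (B i \<le> A k \<or> B k \<le> A i)"
          then have lt: "A k < B i" "A i < B k" by auto
          define m where "m = (max (A i) (A k) + min (B i) (B k)) / 2"
          have "m \<in> {A i<..<B i}" "m \<in> {A k<..<B k}"
            using lt hAB[OF ik(1)] hAB[OF ik(2)] by (auto simp: m_def)
          then have "m \<in> interior (h i) \<inter> interior (h k)"
            using hAB[OF ik(1)] hAB[OF ik(2)] by simp
          then show False using disj by blast
        qed
      qed
      have c3: "(\<Sum>i<n. B i - A i) < d"
      proof -
        have "(\<Sum>i<n. B i - A i) = (\<Sum>i<n. cnt (h i))"
          by (rule sum.cong[OF refl]) (use hAB in force)
        also have "\<dots> = sum cnt D'"
          using sum.reindex_bij_betw[OF h, of cnt] by (simp add: n_def atLeast0LessThan)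
        also have "\<dots> \<le> sum cnt D"
          using fin by (intro sum_mono2) (auto simp: D'_def)
        finally show ?thesis using D(3) by simp
      qed
      show ?thesis using dP0[rule_format, OF conjI[OF c1 conjI[OF c2 c3]]] by simp
    qed
    also have "\<dots> < e"
    proof -
      have "sqrt 2 < 2" using real_sqrt_less_iff[of 2 4] by simp
      then show ?thesis using e by (simp add: field_simps)
    qed
    finally show ?thesis by (simp add: n_def)
  qed
  then show "\<exists>d>0. \<forall>D. D division_of \<Union>D \<and> \<Union>D \<subseteq> {a..b} \<and> sum cnt D < d \<longrightarrow>
             (\<Sum>K\<in>D. \<bar>coef (u (Sup K)) j - coef (u (Inf K)) j\<bar>) < e"
    using d by blast
qed

lemma ae_to_negl:
  fixes P :: "real \<Rightarrow> bool"
  assumes "AE t in lebesgue_on {0<..}. P t"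
  shows "\<exists>N. negligible N \<and> (\<forall>t>0. t \<notin> N \<longrightarrow> P t)"
proof -
  have "AE t in lebesgue. t \<in> {0<..} \<longrightarrow> P t"
    using assms by (subst (asm) AE_restrict_space_iff) auto
  then obtain N where N: "{x \<in> space lebesgue. \<not> (x \<in> {0<..} \<longrightarrow> P x)} \<subseteq> N" "emeasure lebesgue N = 0" "N \<in> sets lebesgue"
    by (rule AE_E)
  have "negligible N" using N(2,3) by (simp add: negligible_iff_null_sets null_sets_def)
  moreover have "\<forall>t>0. t \<notin> N \<longrightarrow> P t" using N(1) by auto
  ultimately show ?thesis by blast
qed

lemma lam_ge1: "1 \<le> lam j"
proof -
  have "1 * 1 \<le> real (Suc j) * pi"
    using pi_gt3 by (intro mult_mono) auto
  then have "1 \<le> real (Suc j) * pi" by simp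
  then show ?thesis unfolding lam_def by (rule one_le_power)
qed

lemma lam_pos: "0 < lam j"
  using lam_ge1[of j] by linarith

lemma exp_lip:
  fixes l a b s t :: real
  assumes l: "0 \<le> l" and s: "s \<in> {a..b}" and t: "t \<in> {a..b}"
  shows "\<bar>exp (l * t) - exp (l * s)\<bar> \<le> (l * exp (l * b)) * \<bar>t - s\<bar>"
proof -
  have gen: "\<bar>exp (l * y) - exp (l * x)\<bar> \<le> (l * exp (l * b)) * \<bar>y - x\<bar>"
    if xy: "x < y" "y \<le> b" for x y
  proof -
    have "\<And>z. x \<le> z \<Longrightarrow> z \<le> y \<Longrightarrow> ((\<lambda>z. exp (l * z)) has_real_derivative (l * exp (l * z))) (at z)"
      by (auto intro!: derivative_eq_intros)
    then obtain z where z: "x < z" "z < y" "exp (l * y) - exp (l * x) = (y - x) * (l * exp (l * z))"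
      using MVT2[OF xy(1), of "\<lambda>z. exp (l * z)" "\<lambda>z. l * exp (l * z)"] by blast
    have "exp (l * z) \<le> exp (l * b)" using z xy l by (auto intro!: mult_left_mono)
    then have "l * exp (l * z) \<le> l * exp (l * b)" using l by (rule mult_left_mono)
    moreover have "0 \<le> l * exp (l * z)" using l by simp
    ultimately show ?thesis using z xy
      by (simp add: abs_mult)
  qed
  show ?thesis
  proof (cases s t rule: linorder_cases)
    case less then show ?thesis using gen[of s t] t by auto
  next
    case equal then show ?thesis by simp
  next
    case greater then show ?thesis using gen[of t s] s by (auto simp: abs_minus_commute)
  qed
qed

lemma powr_le_1_plus:
  fixes y \<beta> :: real
  assumes "0 < y" "0 \<le> \<beta>" "\<beta> \<le> 1"
  shows "y powr \<beta> \<le> 1 + y"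
proof (cases "y \<le> 1")
  case True
  then have "y powr \<beta> \<le> 1" using assms by (intro powr_le1) auto
  then show ?thesis using assms by simp
next
  case False
  then have "y powr \<beta> \<le> y powr 1" using assms by (intro powr_mono) auto
  then show ?thesis using assms by simp
qed

lemma powr_exp_bound:
  fixes l x \<beta> :: real
  assumes l: "0 < l" and x: "0 < x" and \<beta>: "0 \<le> \<beta>" "\<beta> \<le> 1"
  shows "l powr \<beta> * exp (- (l * x)) \<le> x powr (- \<beta>)"
proof -
  define y where "y = l * x"
  have y: "0 < y" using l x by (simp add: y_def)
  have "l powr \<beta> = y powr \<beta> * x powr (- \<beta>)"
    using l x by (simp add: y_def powr_mult powr_minus field_simps)
  then have "l powr \<beta> * exp (- (l * x)) = x powr (- \<beta>) * (y powr \<beta> * exp (- y))"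
    by (simp add: y_def)
  also have "y powr \<beta> * exp (- y) \<le> (1 + y) * exp (- y)"
    using powr_le_1_plus[OF y \<beta>] by (intro mult_right_mono) auto
  also have "(1 + y) * exp (- y) \<le> 1"
    using exp_ge_add_one_self[of y] by (simp add: exp_minus field_simps)
  finally show ?thesis using x by (simp add: mult_left_mono)
qed

lemma exp_bound2:
  fixes l p :: real
  assumes l: "1 \<le> l" and p: "0 \<le> p" "p \<le> 2"
  shows "l powr p * exp (- l) \<le> 4"
proof -
  have "l powr p \<le> l powr 2" using l p by (intro powr_mono) auto
  also have "l powr 2 = l\<^sup>2" using l by (simp add: powr_numeral)
  finally have lp: "l powr p \<le> l\<^sup>2" .
  have "(l / 2)\<^sup>2 \<le> (1 + l / 2)\<^sup>2" using l by (intro power_mono) auto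
  also have "(1 + l / 2)\<^sup>2 \<le> (exp (l / 2))\<^sup>2"
    using exp_ge_add_one_self[of "l/2"] l by (intro power_mono) auto
  also have "(exp (l / 2))\<^sup>2 = exp l" by (simp add: power2_eq_square exp_add[symmetric])
  finally have "l\<^sup>2 \<le> 4 * exp l" by (simp add: power_divide)
  then have "l\<^sup>2 * exp (- l) \<le> 4" by (simp add: exp_minus field_simps)
  moreover have "l powr p * exp (- l) \<le> l\<^sup>2 * exp (- l)" using lp by (intro mult_right_mono) auto
  ultimately show ?thesis by linarith
qed

lemma CS_gen:
  fixes f g :: "'a \<Rightarrow> real"
  assumes iA: "integrable M (\<lambda>x. (f x)\<^sup>2)" and iC: "integrable M (\<lambda>x. (g x)\<^sup>2)"
    and iB: "integrable M (\<lambda>x. f x * g x)"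
  shows "(integral\<^sup>L M (\<lambda>x. f x * g x))\<^sup>2 \<le> integral\<^sup>L M (\<lambda>x. (f x)\<^sup>2) * integral\<^sup>L M (\<lambda>x. (g x)\<^sup>2)"
proof -
  define A where "A = integral\<^sup>L M (\<lambda>x. (f x)\<^sup>2)"
  define B where "B = integral\<^sup>L M (\<lambda>x. f x * g x)"
  define C where "C = integral\<^sup>L M (\<lambda>x. (g x)\<^sup>2)"
  have Q: "0 \<le> t\<^sup>2 * A - 2 * t * B + C" for t
  proof -
    have "0 \<le> integral\<^sup>L M (\<lambda>x. (t * f x - g x)\<^sup>2)"
      by (rule integral_nonneg_AE) auto
    also have "(\<lambda>x. (t * f x - g x)\<^sup>2) = (\<lambda>x. t\<^sup>2 * (f x)\<^sup>2 - 2 * t * (f x * g x) + (g x)\<^sup>2)"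
      by (auto simp: power2_eq_square algebra_simps)
    also have "integral\<^sup>L M \<dots> = t\<^sup>2 * A - 2 * t * B + C"
      using iA iB iC by (simp add: A_def B_def C_def)
    finally show ?thesis .
  qed
  have A0: "0 \<le> A" unfolding A_def by (rule integral_nonneg_AE) auto
  show ?thesis
  proof (cases "A = 0")
    case True
    have "B = 0"
    proof (rule ccontr)
      assume "B \<noteq> 0"
      have "0 \<le> ((C + 1) / (2 * B))\<^sup>2 * A - 2 * ((C + 1) / (2 * B)) * B + C" by (rule Q)
      with True \<open>B \<noteq> 0\<close> show False by (simp add: field_simps)
    qed
    then show ?thesis using True by (simp add: A_def[symmetric] B_def[symmetric])
  next
    case False
    then have Ap: "A > 0" using A0 by simp
    have "0 \<le> (B / A)\<^sup>2 * A - 2 * (B / A) * B + C" by (rule Q)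
    also have "\<dots> = C - B\<^sup>2 / A" using Ap by (simp add: power2_eq_square field_simps)
    finally have "B\<^sup>2 / A \<le> C" by simp
    then have "B\<^sup>2 \<le> A * C" using Ap by (simp add: field_simps)
    then show ?thesis by (simp add: A_def B_def C_def)
  qed
qed

lemma HK_to_L:
  fixes f :: "real \<Rightarrow> real"
  assumes "integrable (lebesgue_on {a..b}) f" "(f has_integral I) {a..b}"
  shows "integral\<^sup>L (lebesgue_on {a..b}) f = I"
proof -
  have "(f has_integral (integral\<^sup>L (lebesgue_on {a..b}) f)) {a..b}"
    by (rule has_integral_integral_lebesgue_on[OF assms(1)]) auto
  then show ?thesis using assms(2) by (rule has_integral_unique)
qed

lemma HK_nonneg_to_L:
  fixes f :: "real \<Rightarrow> real"
  assumes "(f has_integral I) {a..b}" "\<And>x. x \<in> {a..b} \<Longrightarrow> 0 \<le> f x"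
  shows "integrable (lebesgue_on {a..b}) f" "integral\<^sup>L (lebesgue_on {a..b}) f = I"
proof -
  have "f absolutely_integrable_on {a..b}"
    using assms by (intro nonnegative_absolutely_integrable_1) (auto simp: has_integral_integrable)
  then have "integrable lebesgue (\<lambda>x. indicator {a..b} x *\<^sub>R f x)"
    by (simp add: set_integrable_def)
  then show i: "integrable (lebesgue_on {a..b}) f"
    by (subst integrable_restrict_space) auto
  show "integral\<^sup>L (lebesgue_on {a..b}) f = I" by (rule HK_to_L[OF i assms(1)])
qed

lemma lint_exp:
  fixes l :: real
  assumes l: "0 < l"
  shows "integrable (lebesgue_on {1/2..1}) (\<lambda>\<tau>. exp (- (l * (1 - \<tau>))))"
    "integral\<^sup>L (lebesgue_on {1/2..1}) (\<lambda>\<tau>. exp (- (l * (1 - \<tau>)))) \<le> 1 / l"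
proof -
  have hi: "((\<lambda>\<tau>. exp (- (l * (1 - \<tau>)))) has_integral
          (exp (- (l * (1 - 1))) / l - exp (- (l * (1 - 1/2))) / l)) {1/2..1}"
  proof (rule fundamental_theorem_of_calculus)
    fix x :: real
    have "((\<lambda>\<tau>. exp (- (l * (1 - \<tau>))) / l) has_real_derivative exp (- (l * (1 - x)))) (at x within {1/2..1})"
      using l by (auto intro!: derivative_eq_intros)
    then show "((\<lambda>\<tau>. exp (- (l * (1 - \<tau>))) / l) has_vector_derivative exp (- (l * (1 - x)))) (at x within {1/2..1})"
      by (simp add: has_real_derivative_iff_has_vector_derivative)
  qed simp
  have nn: "\<And>x. x \<in> {1/2..1} \<Longrightarrow> 0 \<le> exp (- (l * (1 - x)))" by simp
  show "integrable (lebesgue_on {1/2..1}) (\<lambda>\<tau>. exp (- (l * (1 - \<tau>))))"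
    using HK_nonneg_to_L(1)[OF hi nn] .
  have "integral\<^sup>L (lebesgue_on {1/2..1}) (\<lambda>\<tau>. exp (- (l * (1 - \<tau>))))
        = exp (- (l * (1 - 1))) / l - exp (- (l * (1 - 1/2))) / l"
    using HK_nonneg_to_L(2)[OF hi nn] .
  also have "\<dots> \<le> 1 / l" using l by (simp add: divide_right_mono)
  finally show "integral\<^sup>L (lebesgue_on {1/2..1}) (\<lambda>\<tau>. exp (- (l * (1 - \<tau>)))) \<le> 1 / l" .
qed

lemma lint_powr:
  fixes \<beta> :: real
  assumes \<beta>: "0 \<le> \<beta>" "\<beta> < 1"
  shows "integrable (lebesgue_on {1/2..1}) (\<lambda>\<tau>. (1 - \<tau>) powr (- \<beta>))"
    "integral\<^sup>L (lebesgue_on {1/2..1}) (\<lambda>\<tau>. (1 - \<tau>) powr (- \<beta>)) = (1/2) powr (1 - \<beta>) / (1 - \<beta>)"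
proof -
  define F where "F \<tau> = - ((1 - \<tau>) powr (1 - \<beta>) / (1 - \<beta>))" for \<tau> :: real
  have hi: "((\<lambda>\<tau>. (1 - \<tau>) powr (- \<beta>)) has_integral (F 1 - F (1/2))) {1/2..1}"
  proof (rule fundamental_theorem_of_calculus_interior)
    show "continuous_on {1/2..1} F"
      unfolding F_def using \<beta> by (intro continuous_intros continuous_on_powr') auto
    fix x :: real assume x: "x \<in> {1/2<..<1}"
    have "(F has_real_derivative (1 - x) powr (- \<beta>)) (at x)"
    proof -
      have "(F has_real_derivative - (((1 - \<beta>) * (1 - x) powr (1 - \<beta> - 1) * (0 - 1)) / (1 - \<beta>))) (at x)"
        unfolding F_def using x \<beta>
        by (auto intro!: derivative_eq_intros)
      moreover have "- (((1 - \<beta>) * (1 - x) powr (1 - \<beta> - 1) * (0 - 1)) / (1 - \<beta>)) = (1 - x) powr (- \<beta>)"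
        using \<beta> by simp
      ultimately show ?thesis by simp
    qed
    then show "(F has_vector_derivative (1 - x) powr (- \<beta>)) (at x)"
      by (simp add: has_real_derivative_iff_has_vector_derivative)
  qed simp
  have nn: "\<And>x. x \<in> {1/2..1} \<Longrightarrow> 0 \<le> (1 - x) powr (- \<beta>)" by simp
  show "integrable (lebesgue_on {1/2..1}) (\<lambda>\<tau>. (1 - \<tau>) powr (- \<beta>))"
    using HK_nonneg_to_L(1)[OF hi nn] .
  have "F 1 - F (1/2) = (1/2) powr (1 - \<beta>) / (1 - \<beta>)" by (simp add: F_def)
  then show "integral\<^sup>L (lebesgue_on {1/2..1}) (\<lambda>\<tau>. (1 - \<tau>) powr (- \<beta>)) = (1/2) powr (1 - \<beta>) / (1 - \<beta>)"
    using HK_nonneg_to_L(2)[OF hi nn] by simp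
qed

lemma sol_data:
  assumes sol: "solP b \<omega> u0 u"
  obtains r N where "L2loc r" "negligible N"
    "\<And>t. t > 0 \<Longrightarrow> t \<notin> N \<Longrightarrow> inH (r t) \<and>
        (\<exists>w g. hderiv u t w \<and> isA (u t) g \<and> hdist (\<lambda>x. w x + g x) (r t) = 0) \<and>
        (AE x in M01. r t x \<in> {b * s + \<omega> * u t x | s. s \<in> H0 (u t x)})"
proof -
  from sol obtain r where r: "L2loc r"
    "AE t in lebesgue_on {0<..}. AE x in lebesgue_on {0..1}.
            r t x \<in> {b * s + \<omega> * u t x | s. s \<in> H0 (u t x)}"
    "AE t in lebesgue_on {0<..}. \<exists>w g. hderiv u t w \<and> isA (u t) g \<and>
            hdist (\<lambda>x. w x + g x) (r t) = 0"
    unfolding solP_def by blast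
  have "AE t in lebesgue_on {0<..}. inH (r t)" using r(1) by (simp add: L2loc_def)
  then have "AE t in lebesgue_on {0<..}. inH (r t) \<and>
        (\<exists>w g. hderiv u t w \<and> isA (u t) g \<and> hdist (\<lambda>x. w x + g x) (r t) = 0) \<and>
        (AE x in M01. r t x \<in> {b * s + \<omega> * u t x | s. s \<in> H0 (u t x)})"
    using r(2) r(3) by (intro AE_conjI) auto
  then obtain N where "negligible N" "\<forall>t>0. t \<notin> N \<longrightarrow> inH (r t) \<and>
        (\<exists>w g. hderiv u t w \<and> isA (u t) g \<and> hdist (\<lambda>x. w x + g x) (r t) = 0) \<and>
        (AE x in M01. r t x \<in> {b * s + \<omega> * u t x | s. s \<in> H0 (u t x)})"
    using ae_to_negl by blast
  then show ?thesis using that r(1) by blast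
qed

lemma coef_deriv:
  assumes hc: "hcont u" and t: "t > 0"
    and hd: "hderiv u t w" and iA: "isA (u t) g" and hr: "hdist (\<lambda>x. w x + g x) (r t) = 0"
    and ir: "inH (r t)"
  shows "((\<lambda>s. coef (u s) j) has_real_derivative (coef (r t) j - lam j * coef (u t) j)) (at t)"
proof -
  have iw: "inH w" using hd by (simp add: hderiv_def)
  have ig: "inH g" and iu: "inH (u t)" and cg: "coef g j = lam j * coef (u t) j"
    using iA by (auto simp: isA_def inDA_def)
  have "coef w j + coef g j = coef (r t) j"
    using coef_add[OF iw ig, of j] coef_hdist0[OF inH_add[OF iw ig] ir hr, of j] by simp
  then have cw: "coef w j = coef (r t) j - lam j * coef (u t) j" using cg by simp
  have lim0: "((\<lambda>h. hdist (\<lambda>x. (u (t + h) x - u t x) / h) w) \<longlongrightarrow> 0) (at 0)"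
    using hd by (simp add: hderiv_def)
  have lim1: "((\<lambda>h. sqrt 2 * hdist (\<lambda>x. (u (t + h) x - u t x) / h) w) \<longlongrightarrow> 0) (at 0)"
    using tendsto_mult[OF tendsto_const lim0, of "sqrt 2"] by simp
  have ev: "eventually (\<lambda>h. norm ((coef (u (t + h)) j - coef (u t) j) / h - coef w j)
              \<le> sqrt 2 * hdist (\<lambda>x. (u (t + h) x - u t x) / h) w) (at 0)"
    unfolding eventually_at
  proof (intro exI[of _ t] conjI ballI impI)
    show "t > 0" by (rule t)
    fix h :: real assume h0: "h \<in> UNIV" and h: "h \<noteq> 0 \<and> dist h 0 < t"
    then have "t + h \<ge> 0" by (auto simp: dist_real_def)
    then have iuh: "inH (u (t + h))" using hc by (simp add: hcont_def)
    have feq: "(\<lambda>x. (u (t + h) x - u t x) / h) = (\<lambda>x. (1 / h) * u (t + h) x + (- 1 / h) * u t x)"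
      by (rule ext) (simp add: diff_divide_distrib)
    have iq: "inH (\<lambda>x. (u (t + h) x - u t x) / h)"
      unfolding feq by (rule inH_lin[OF iuh iu])
    have "coef (\<lambda>x. (u (t + h) x - u t x) / h) j = (coef (u (t + h)) j - coef (u t) j) / h"
      unfolding feq coef_lin[OF iuh iu] by (simp add: diff_divide_distrib)
    then show "norm ((coef (u (t + h)) j - coef (u t) j) / h - coef w j)
              \<le> sqrt 2 * hdist (\<lambda>x. (u (t + h) x - u t x) / h) w"
      using coef_abs_le[OF iq iw, of j] by simp
  qed
  have "((\<lambda>h. (coef (u (t + h)) j - coef (u t) j) / h - coef w j) \<longlongrightarrow> 0) (at 0)"
    by (rule Lim_null_comparison[OF ev lim1])
  then have "((\<lambda>h. (coef (u (t + h)) j - coef (u t) j) / h) \<longlongrightarrow> coef w j) (at 0)"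
    by (simp add: LIM_zero_iff)
  then show ?thesis unfolding DERIV_def cw[symmetric] .
qed

lemma coef_r_meas:
  assumes "L2loc r"
  shows "(\<lambda>t. coef (r t) j) \<in> borel_measurable (lebesgue_on {1/2..1})"
proof -
  have "(\<lambda>t. integral\<^sup>L M01 (\<lambda>x. r t x * ef j x)) \<in> borel_measurable (lebesgue_on {0<..})"
    using assms inH_ef[of j] by (simp add: L2loc_def)
  then have "(\<lambda>t. integral\<^sup>L M01 (\<lambda>x. r t x * ef j x)) \<in> borel_measurable (lebesgue_on {1/2..1})"
    by (rule measurable_restrict_mono) auto
  then show ?thesis by (simp add: coef_def)
qed

lemma r_bound:
  assumes b: "0 \<le> b" and w: "0 \<le> \<omega>" and ir: "inH (r t)" and iu: "inH (u t)"
    and ae: "AE x in M01. r t x \<in> {b * s + \<omega> * u t x | s. s \<in> H0 (u t x)}"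
  shows "(hnorm (r t))\<^sup>2 \<le> 2 * b\<^sup>2 + 2 * \<omega>\<^sup>2 * (hnorm (u t))\<^sup>2"
proof -
  have pt: "AE x in M01. (r t x)\<^sup>2 \<le> 2 * b\<^sup>2 + 2 * \<omega>\<^sup>2 * (u t x)\<^sup>2"
    using ae
  proof (rule AE_mp, intro AE_I2 impI)
    fix x assume "r t x \<in> {b * s + \<omega> * u t x | s. s \<in> H0 (u t x)}"
    then obtain s where s: "r t x = b * s + \<omega> * u t x" "s \<in> H0 (u t x)" by blast
    have "\<bar>s\<bar> \<le> 1" using s(2) by (auto simp: H0_def split: if_splits)
    then have s2: "s\<^sup>2 \<le> 1" by (simp add: abs_square_le_1)
    have "(b * s + \<omega> * u t x)\<^sup>2 \<le> 2 * (b * s)\<^sup>2 + 2 * (\<omega> * u t x)\<^sup>2"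
    proof -
      have "0 \<le> (b * s - \<omega> * u t x)\<^sup>2" by simp
      then show ?thesis by (simp add: power2_eq_square algebra_simps)
    qed
    also have "(b * s)\<^sup>2 \<le> b\<^sup>2" using s2 by (simp add: power_mult_distrib mult_left_le)
    finally show "(r t x)\<^sup>2 \<le> 2 * b\<^sup>2 + 2 * \<omega>\<^sup>2 * (u t x)\<^sup>2"
      using s(1) by (simp add: power_mult_distrib)
  qed
  have "(hnorm (r t))\<^sup>2 = integral\<^sup>L M01 (\<lambda>x. (r t x)\<^sup>2)" by (rule hnorm_sq)
  also have "\<dots> \<le> integral\<^sup>L M01 (\<lambda>x. 2 * b\<^sup>2 + 2 * \<omega>\<^sup>2 * (u t x)\<^sup>2)"
    using inH_sq[OF ir] inH_sq[OF iu] pt by (intro integral_mono_AE) auto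
  also have "\<dots> = 2 * b\<^sup>2 + 2 * \<omega>\<^sup>2 * integral\<^sup>L M01 (\<lambda>x. (u t x)\<^sup>2)"
    using inH_sq[OF iu] by (simp add: measure_restrict_space)
  also have "\<dots> = 2 * b\<^sup>2 + 2 * \<omega>\<^sup>2 * (hnorm (u t))\<^sup>2" by (simp add: hnorm_sq)
  finally show ?thesis .
qed

lemma integrable_bdd_on:
  fixes f :: "real \<Rightarrow> real"
  assumes "f \<in> borel_measurable (lebesgue_on {a..b})" "\<And>x. x \<in> {a..b} \<Longrightarrow> \<bar>f x\<bar> \<le> B"
  shows "integrable (lebesgue_on {a..b}) f"
proof -
  have fm: "finite_measure (lebesgue_on {a..b})"
    by (rule finite_measure_lebesgue_on) auto
  have "AE x in lebesgue_on {a..b}. norm (f x) \<le> B"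
    using assms(2) by (intro AE_I2) auto
  then show ?thesis
    using finite_measure.integrable_const_bound[OF fm, of f B] assms(1) by auto
qed

lemma meas_exp_on: "(\<lambda>t. exp (c * t + d)) \<in> borel_measurable (lebesgue_on {a..b::real})"
  by (intro continuous_imp_measurable_on_sets_lebesgue continuous_intros) auto

lemma per_j:
  fixes u r :: "real \<Rightarrow> real \<Rightarrow> real" and \<rho> :: "real \<Rightarrow> real"
  assumes hab: "habscont u (1/2) 1"
    and iu: "\<And>t. t \<ge> 0 \<Longrightarrow> inH (u t)"
    and N: "negligible N"
    and dc: "\<And>t. t \<in> {1/2..1} \<Longrightarrow> t \<notin> N \<Longrightarrow>
          ((\<lambda>s. coef (u s) j) has_real_derivative (coef (r t) j - lam j * coef (u t) j)) (at t)"
    and \<rho>def: "\<And>t. \<rho> t = (if t \<in> N then 0 else coef (r t) j)"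
    and \<rho>m: "\<rho> \<in> borel_measurable (lebesgue_on {1/2..1})"
    and \<rho>b: "\<And>t. t \<in> {1/2..1} \<Longrightarrow> \<bar>\<rho> t\<bar> \<le> B"
    and bnd: "\<And>\<tau>. \<tau> \<in> {0..1} \<Longrightarrow> hnorm (u \<tau>) \<le> R" and R: "0 \<le> R"
    and rr: "1/2 \<le> rr" "rr < 1"
  shows "integrable (lebesgue_on {1/2..1}) (\<lambda>\<tau>. lam j powr (2*rr - 1) * exp (- (lam j * (1 - \<tau>))) * (\<rho> \<tau>)\<^sup>2)"
    "lam j powr (2*rr) * (coef (u 1) j)\<^sup>2 \<le> 8 * (coef (u (1/2)) j)\<^sup>2
       + 2 * integral\<^sup>L (lebesgue_on {1/2..1}) (\<lambda>\<tau>. lam j powr (2*rr - 1) * exp (- (lam j * (1 - \<tau>))) * (\<rho> \<tau>)\<^sup>2)"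
proof -
  define l where "l = lam j"
  have l1: "1 \<le> l" and l0: "0 < l" using lam_ge1[of j] by (auto simp: l_def)
  define c where "c t = coef (u t) j" for t
  define LM where "LM = lebesgue_on {1/2..1::real}"
  have B0: "0 \<le> B" using \<rho>b[of 1] by auto
  have acc: "acf c (1/2) 1"
    unfolding c_def by (rule acf_habscont[OF hab]) (auto intro: iu)
  have cb: "\<bar>c t\<bar> \<le> sqrt 2 * R" if "t \<in> {1/2..1}" for t
  proof -
    have "(c t)\<^sup>2 \<le> 2 * (hnorm (u t))\<^sup>2" unfolding c_def by (rule coef_sq_le[OF iu]) (use that in auto)
    also have "\<dots> \<le> 2 * R\<^sup>2" using bnd[of t] that hnorm_nonneg[of "u t"] by (auto intro!: power_mono)
    finally have "sqrt ((c t)\<^sup>2) \<le> sqrt (2 * R\<^sup>2)" by (rule real_sqrt_le_mono)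
    then show ?thesis using R by (simp add: real_sqrt_mult)
  qed
  have acphi: "acf (\<lambda>t. exp (l * t) * c t) (1/2) 1"
  proof (rule acf_mult[OF acc, where BE="exp l" and Bc="sqrt 2 * R" and L="l * exp (l * 1)"])
    fix t :: real assume "t \<in> {1/2..1}"
    then show "\<bar>exp (l * t)\<bar> \<le> exp l" using l0 by auto
  next
    fix t :: real assume "t \<in> {1/2..1}"
    then show "\<bar>c t\<bar> \<le> sqrt 2 * R" by (rule cb)
  next
    fix s t :: real assume "s \<in> {1/2..1}" "t \<in> {1/2..1}"
    then show "\<bar>exp (l * t) - exp (l * s)\<bar> \<le> l * exp (l * 1) * \<bar>t - s\<bar>"
      using exp_lip[of l s "1/2" 1 t] l0 by auto
  qed (use l0 R in auto)
  have der: "((\<lambda>t. exp (l * t) * c t) has_real_derivative (exp (l * t) * coef (r t) j)) (at t within {1/2..1})"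
    if t: "t \<in> {1/2..1}" "t \<notin> N" for t
  proof -
    have d1: "((\<lambda>t. exp (l * t)) has_real_derivative (l * exp (l * t))) (at t)"
      by (auto intro!: derivative_eq_intros)
    have d2: "(c has_real_derivative (coef (r t) j - l * c t)) (at t)"
      using dc[OF t] by (simp add: c_def[abs_def] l_def)
    have "((\<lambda>t. exp (l * t) * c t) has_real_derivative
           (l * exp (l * t) * c t + (coef (r t) j - l * c t) * exp (l * t))) (at t)"
      by (rule DERIV_mult[OF d1 d2])
    moreover have "l * exp (l * t) * c t + (coef (r t) j - l * c t) * exp (l * t) = exp (l * t) * coef (r t) j"
      by (simp add: algebra_simps)
    ultimately show ?thesis by (simp add: has_field_derivative_at_within)
  qed
  have hi0: "((\<lambda>t. if t \<in> N then 0 else exp (l * t) * coef (r t) j) has_integral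
            (exp (l * 1) * c 1 - exp (l * (1/2)) * c (1/2))) {1/2..1}"
    by (rule ftc_ac[OF _ _ N der]) (use acphi in \<open>auto simp: acf_def\<close>)
  have feq: "(\<lambda>t. if t \<in> N then 0 else exp (l * t) * coef (r t) j) = (\<lambda>t. exp (l * t) * \<rho> t)"
    by (auto simp: \<rho>def)
  have ie\<rho>: "integrable LM (\<lambda>t. exp (l * t) * \<rho> t)"
    unfolding LM_def
  proof (rule integrable_bdd_on[where B="exp l * B"])
    show "(\<lambda>t. exp (l * t) * \<rho> t) \<in> borel_measurable (lebesgue_on {1/2..1})"
      using meas_exp_on[of l 0] \<rho>m by (intro borel_measurable_times) auto
    fix x :: real assume x: "x \<in> {1/2..1}"
    have "\<bar>exp (l * x) * \<rho> x\<bar> = exp (l * x) * \<bar>\<rho> x\<bar>" by (simp add: abs_mult)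
    also have "\<dots> \<le> exp l * B" using x l0 \<rho>b[OF x] B0 by (intro mult_mono) auto
    finally show "\<bar>exp (l * x) * \<rho> x\<bar> \<le> exp l * B" .
  qed
  have I1: "integral\<^sup>L LM (\<lambda>t. exp (l * t) * \<rho> t) = exp l * c 1 - exp (l / 2) * c (1/2)"
    using HK_to_L[OF ie\<rho>[unfolded LM_def], of "exp (l * 1) * c 1 - exp (l * (1/2)) * c (1/2)"] hi0
    unfolding feq LM_def by simp
  define X where "X = integral\<^sup>L LM (\<lambda>\<tau>. exp (- (l * (1 - \<tau>))) * \<rho> \<tau>)"
  have "X = exp (- l) * integral\<^sup>L LM (\<lambda>t. exp (l * t) * \<rho> t)"
  proof -
    have "(\<lambda>\<tau>. exp (- (l * (1 - \<tau>))) * \<rho> \<tau>) = (\<lambda>\<tau>. exp (- l) * (exp (l * \<tau>) * \<rho> \<tau>))"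
      by (auto simp: algebra_simps exp_add[symmetric])
    then show ?thesis unfolding X_def by simp
  qed
  also have "\<dots> = (exp (- l) * exp l) * c 1 - (exp (- l) * exp (l / 2)) * c (1/2)"
    unfolding I1 by (simp add: algebra_simps)
  also have "exp (- l) * exp l = 1" by (simp add: exp_minus)
  also have "exp (- l) * exp (l / 2) = exp (- (l / 2))" by (simp add: exp_add[symmetric])
  also have "1 * c 1 - exp (- (l / 2)) * c (1/2) = c 1 - exp (- (l / 2)) * c (1/2)" by simp
  finally have c1: "c 1 = exp (- (l / 2)) * c (1/2) + X" by simp
  define f where "f \<tau> = exp (- (l * (1 - \<tau>)) / 2)" for \<tau>
  define g where "g \<tau> = exp (- (l * (1 - \<tau>)) / 2) * \<rho> \<tau>" for \<tau>
  have fsq: "(f \<tau>)\<^sup>2 = exp (- (l * (1 - \<tau>)))" for \<tau>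
    by (simp add: f_def power2_eq_square exp_add[symmetric])
  have gsq: "(g \<tau>)\<^sup>2 = exp (- (l * (1 - \<tau>))) * (\<rho> \<tau>)\<^sup>2" for \<tau>
    by (simp add: g_def power2_eq_square exp_add[symmetric] algebra_simps)
  have fg: "f \<tau> * g \<tau> = exp (- (l * (1 - \<tau>))) * \<rho> \<tau>" for \<tau>
    by (simp add: f_def g_def exp_add[symmetric] algebra_simps)
  have mE: "(\<lambda>\<tau>. exp (- (l * (1 - \<tau>)))) \<in> borel_measurable LM"
    unfolding LM_def by (intro continuous_imp_measurable_on_sets_lebesgue continuous_intros) auto
  have bE: "\<bar>exp (- (l * (1 - \<tau>)))\<bar> \<le> 1" if "\<tau> \<in> {1/2..1}" for \<tau>
    using that l0 by auto
  have iG: "integrable LM (\<lambda>\<tau>. exp (- (l * (1 - \<tau>))) * (\<rho> \<tau>)\<^sup>2)"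
    unfolding LM_def
  proof (rule integrable_bdd_on[where B="B\<^sup>2"])
    show "(\<lambda>\<tau>. exp (- (l * (1 - \<tau>))) * (\<rho> \<tau>)\<^sup>2) \<in> borel_measurable (lebesgue_on {1/2..1})"
      using mE \<rho>m unfolding LM_def by (intro borel_measurable_times borel_measurable_power) auto
    fix x :: real assume x: "x \<in> {1/2..1}"
    have "\<bar>exp (- (l * (1 - x))) * (\<rho> x)\<^sup>2\<bar> = exp (- (l * (1 - x))) * (\<rho> x)\<^sup>2" by simp
    also have "\<dots> \<le> 1 * B\<^sup>2"
      using x l0 \<rho>b[OF x] B0 by (intro mult_mono) (auto simp: abs_le_square_iff[symmetric] power2_abs intro: power_mono)
    finally show "\<bar>exp (- (l * (1 - x))) * (\<rho> x)\<^sup>2\<bar> \<le> B\<^sup>2" by simp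
  qed
  have iF: "integrable LM (\<lambda>\<tau>. exp (- (l * (1 - \<tau>))))"
    using lint_exp(1)[OF l0] by (simp add: LM_def)
  have iFG: "integrable LM (\<lambda>\<tau>. exp (- (l * (1 - \<tau>))) * \<rho> \<tau>)"
    unfolding LM_def
  proof (rule integrable_bdd_on[where B="B"])
    show "(\<lambda>\<tau>. exp (- (l * (1 - \<tau>))) * \<rho> \<tau>) \<in> borel_measurable (lebesgue_on {1/2..1})"
      using mE \<rho>m unfolding LM_def by (intro borel_measurable_times) auto
    fix x :: real assume x: "x \<in> {1/2..1}"
    have "\<bar>exp (- (l * (1 - x))) * \<rho> x\<bar> = exp (- (l * (1 - x))) * \<bar>\<rho> x\<bar>" by (simp add: abs_mult)
    also have "\<dots> \<le> 1 * B" using x l0 \<rho>b[OF x] B0 by (intro mult_mono) auto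
    finally show "\<bar>exp (- (l * (1 - x))) * \<rho> x\<bar> \<le> B" by simp
  qed
  define Q where "Q = integral\<^sup>L LM (\<lambda>\<tau>. exp (- (l * (1 - \<tau>))) * (\<rho> \<tau>)\<^sup>2)"
  have Q0: "0 \<le> Q" unfolding Q_def by (rule integral_nonneg_AE) auto
  have "X\<^sup>2 \<le> integral\<^sup>L LM (\<lambda>\<tau>. (f \<tau>)\<^sup>2) * integral\<^sup>L LM (\<lambda>\<tau>. (g \<tau>)\<^sup>2)"
    unfolding X_def fg[symmetric] by (rule CS_gen) (use iF iG iFG in \<open>simp_all add: fsq gsq fg\<close>)
  also have "\<dots> = integral\<^sup>L LM (\<lambda>\<tau>. exp (- (l * (1 - \<tau>)))) * Q"
    by (simp add: fsq gsq Q_def)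
  also have "\<dots> \<le> (1 / l) * Q"
    using lint_exp(2)[OF l0] Q0 by (intro mult_right_mono) (auto simp: LM_def)
  finally have X2: "X\<^sup>2 \<le> Q / l" by simp
  have "(c 1)\<^sup>2 \<le> 2 * (exp (- (l / 2)) * c (1/2))\<^sup>2 + 2 * X\<^sup>2"
  proof -
    have "0 \<le> (exp (- (l / 2)) * c (1/2) - X)\<^sup>2" by simp
    then show ?thesis unfolding c1 by (simp add: power2_eq_square algebra_simps)
  qed
  also have "(exp (- (l / 2)) * c (1/2))\<^sup>2 = exp (- l) * (c (1/2))\<^sup>2"
    by (simp add: power_mult_distrib power2_eq_square exp_add[symmetric])
  finally have c1b: "(c 1)\<^sup>2 \<le> 2 * (exp (- l) * (c (1/2))\<^sup>2) + 2 * X\<^sup>2" .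
  have lp0: "0 \<le> l powr (2 * rr)" by simp
  have S1: "l powr (2 * rr) * (c 1)\<^sup>2 \<le> l powr (2 * rr) * (2 * (exp (- l) * (c (1/2))\<^sup>2) + 2 * X\<^sup>2)"
    using c1b lp0 by (rule mult_left_mono)
  have S2: "l powr (2 * rr) * (2 * (exp (- l) * (c (1/2))\<^sup>2) + 2 * X\<^sup>2)
      = 2 * (l powr (2 * rr) * exp (- l)) * (c (1/2))\<^sup>2 + 2 * (l powr (2 * rr) * X\<^sup>2)"
    by (simp add: algebra_simps)
  have A4: "l powr (2 * rr) * exp (- l) \<le> 4"
    using l1 rr by (intro exp_bound2) auto
  have S3: "2 * (l powr (2 * rr) * exp (- l)) * (c (1/2))\<^sup>2 \<le> 8 * (c (1/2))\<^sup>2"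
  proof -
    have "2 * (l powr (2 * rr) * exp (- l)) \<le> 8" using A4 by linarith
    then show ?thesis by (rule mult_right_mono) simp
  qed
  have S4: "l powr (2 * rr) * X\<^sup>2 \<le> l powr (2 * rr) * (Q / l)"
    using X2 lp0 by (rule mult_left_mono)
  have S5: "l powr (2 * rr) * (Q / l) = l powr (2 * rr - 1) * Q"
    using l0 by (simp add: powr_diff)
  have S6: "l powr (2 * rr - 1) * Q = integral\<^sup>L LM (\<lambda>\<tau>. l powr (2*rr - 1) * exp (- (l * (1 - \<tau>))) * (\<rho> \<tau>)\<^sup>2)"
    unfolding Q_def by (simp add: mult.assoc)
  have "l powr (2 * rr) * (c 1)\<^sup>2 \<le> 8 * (c (1/2))\<^sup>2
       + 2 * integral\<^sup>L LM (\<lambda>\<tau>. l powr (2*rr - 1) * exp (- (l * (1 - \<tau>))) * (\<rho> \<tau>)\<^sup>2)"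
    using S1 S2 S3 S4 S5 S6 by linarith
  then show "lam j powr (2*rr) * (coef (u 1) j)\<^sup>2 \<le> 8 * (coef (u (1/2)) j)\<^sup>2
       + 2 * integral\<^sup>L (lebesgue_on {1/2..1}) (\<lambda>\<tau>. lam j powr (2*rr - 1) * exp (- (lam j * (1 - \<tau>))) * (\<rho> \<tau>)\<^sup>2)"
    by (simp add: l_def c_def LM_def)
  show "integrable (lebesgue_on {1/2..1}) (\<lambda>\<tau>. lam j powr (2*rr - 1) * exp (- (lam j * (1 - \<tau>))) * (\<rho> \<tau>)\<^sup>2)"
    using iG by (simp add: LM_def l_def mult.assoc)
qed

lemma sol_est:
  assumes sol: "solP b \<omega> u0 u" and b: "0 \<le> b" and w: "0 \<le> \<omega>" and R: "0 \<le> R"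
    and bnd: "\<And>\<tau>. \<tau> \<in> {0..1} \<Longrightarrow> hnorm (u \<tau>) \<le> R"
    and rr: "1/2 \<le> rr" "rr < 1"
  shows "(\<Sum>j<n. lam j powr (2*rr) * (coef (u 1) j)\<^sup>2)
           \<le> 8 * R\<^sup>2 + 2 * ((2*b\<^sup>2 + 2*\<omega>\<^sup>2*R\<^sup>2) * ((1/2) powr (2 - 2*rr) / (2 - 2*rr)))"
proof -
  obtain r N0 where r: "L2loc r" "negligible N0" and good0: "\<And>t. t > 0 \<Longrightarrow> t \<notin> N0 \<Longrightarrow> inH (r t) \<and>
        (\<exists>w g. hderiv u t w \<and> isA (u t) g \<and> hdist (\<lambda>x. w x + g x) (r t) = 0) \<and>
        (AE x in M01. r t x \<in> {b * s + \<omega> * u t x | s. s \<in> H0 (u t x)})"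
    by (rule sol_data[OF sol]) blast
  define N where "N = insert 1 N0"
  have N: "negligible N" using r(2) by (simp add: N_def)
  have hc: "hcont u" using sol by (simp add: solP_def)
  have hab: "habscont u (1/2) 1" using sol by (simp add: solP_def)
  have iu: "\<And>t. t \<ge> 0 \<Longrightarrow> inH (u t)" using hc by (simp add: hcont_def)
  define M2 where "M2 = 2*b\<^sup>2 + 2*\<omega>\<^sup>2*R\<^sup>2"
  have M2: "0 \<le> M2" by (simp add: M2_def)
  have good: "inH (r t) \<and> (hnorm (r t))\<^sup>2 \<le> M2 \<and>
      (\<forall>j. ((\<lambda>s. coef (u s) j) has_real_derivative (coef (r t) j - lam j * coef (u t) j)) (at t))"
    if t: "t \<in> {1/2..1}" "t \<notin> N" for t
  proof -
    have tp: "t > 0" "t \<notin> N0" using t by (auto simp: N_def)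
    note G = good0[OF tp]
    obtain w g where wg: "hderiv u t w" "isA (u t) g" "hdist (\<lambda>x. w x + g x) (r t) = 0"
      using G by blast
    have hu: "(hnorm (u t))\<^sup>2 \<le> R\<^sup>2"
      using bnd[of t] t hnorm_nonneg[of "u t"] by (auto intro!: power_mono)
    have "(hnorm (r t))\<^sup>2 \<le> 2 * b\<^sup>2 + 2 * \<omega>\<^sup>2 * (hnorm (u t))\<^sup>2"
      by (rule r_bound[OF b w]) (use G iu tp in auto)
    also have "\<dots> \<le> M2" using hu w by (simp add: M2_def mult_left_mono)
    finally have hr: "(hnorm (r t))\<^sup>2 \<le> M2" .
    have ir: "inH (r t)" using G by blast
    show ?thesis
      using hr ir coef_deriv[where u=u and t=t and w=w and g=g and r=r, OF hc tp(1) wg(1) wg(2) wg(3) ir] by blast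
  qed
  define \<rho> where "\<rho> j t = (if t \<in> N then 0 else coef (r t) j)" for j t
  have Nsets: "N \<inter> space (lebesgue_on {1/2..1::real}) \<in> sets (lebesgue_on {1/2..1})"
    using N by (auto simp: sets_restrict_space_iff negligible_imp_sets)
  have \<rho>m: "\<rho> j \<in> borel_measurable (lebesgue_on {1/2..1})" for j
    unfolding \<rho>_def[abs_def] using coef_r_meas[OF r(1), of j] Nsets
    by (intro measurable_If_set) auto
  have \<rho>b: "\<bar>\<rho> j t\<bar> \<le> sqrt (2 * M2)" if t: "t \<in> {1/2..1}" for j t
  proof (cases "t \<in> N")
    case True then show ?thesis using M2 by (simp add: \<rho>_def)
  next
    case False
    note gt = good[OF t False]
    have "(coef (r t) j)\<^sup>2 \<le> 2 * (hnorm (r t))\<^sup>2" using coef_sq_le gt by blast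
    also have "\<dots> \<le> 2 * M2" using gt by simp
    finally have "sqrt ((coef (r t) j)\<^sup>2) \<le> sqrt (2 * M2)" by (rule real_sqrt_le_mono)
    then show ?thesis using False by (simp add: \<rho>_def)
  qed
  have \<rho>sum: "(\<Sum>j<n. (\<rho> j t)\<^sup>2) \<le> M2" if t: "t \<in> {1/2..1}" for t
  proof (cases "t \<in> N")
    case True then show ?thesis using M2 by (simp add: \<rho>_def)
  next
    case False
    note gt = good[OF t False]
    have "(\<Sum>j<n. (\<rho> j t)\<^sup>2) = (\<Sum>j<n. (coef (r t) j)\<^sup>2)" using False by (simp add: \<rho>_def)
    also have "\<dots> \<le> (hnorm (r t))\<^sup>2" using bessel gt by blast
    also have "\<dots> \<le> M2" using gt by simp
    finally show ?thesis .
  qed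
  define \<beta> where "\<beta> = 2 * rr - 1"
  have \<beta>: "0 \<le> \<beta>" "\<beta> < 1" "\<beta> \<le> 1" using rr by (auto simp: \<beta>_def)
  define Gj where "Gj j \<tau> = lam j powr (2*rr - 1) * exp (- (lam j * (1 - \<tau>))) * (\<rho> j \<tau>)\<^sup>2" for j \<tau>
  have PJ: "integrable (lebesgue_on {1/2..1}) (Gj j) \<and>
      lam j powr (2*rr) * (coef (u 1) j)\<^sup>2 \<le> 8 * (coef (u (1/2)) j)\<^sup>2
       + 2 * integral\<^sup>L (lebesgue_on {1/2..1}) (Gj j)" for j
  proof -
    have dc: "((\<lambda>s. coef (u s) j) has_real_derivative (coef (r t) j - lam j * coef (u t) j)) (at t)"
      if "t \<in> {1/2..1}" "t \<notin> N" for t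
      using good[OF that] by blast
    have \<rho>d: "\<And>t. \<rho> j t = (if t \<in> N then 0 else coef (r t) j)" by (simp add: \<rho>_def)
    show ?thesis
      using per_j[OF hab iu N dc \<rho>d \<rho>m[of j] \<rho>b[of _ j] bnd R rr]
      by (simp add: Gj_def[abs_def])
  qed
  have "(\<Sum>j<n. lam j powr (2*rr) * (coef (u 1) j)\<^sup>2)
        \<le> (\<Sum>j<n. 8 * (coef (u (1/2)) j)\<^sup>2 + 2 * integral\<^sup>L (lebesgue_on {1/2..1}) (Gj j))"
    using PJ by (intro sum_mono) blast
  also have "\<dots> = 8 * (\<Sum>j<n. (coef (u (1/2)) j)\<^sup>2)
        + 2 * integral\<^sup>L (lebesgue_on {1/2..1}) (\<lambda>\<tau>. \<Sum>j<n. Gj j \<tau>)"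
    using PJ by (simp add: sum.distrib sum_distrib_left integral_sum)
  also have "(\<Sum>j<n. (coef (u (1/2)) j)\<^sup>2) \<le> R\<^sup>2"
  proof -
    have "(\<Sum>j<n. (coef (u (1/2)) j)\<^sup>2) \<le> (hnorm (u (1/2)))\<^sup>2" by (rule bessel[OF iu]) simp
    also have "\<dots> \<le> R\<^sup>2" using bnd[of "1/2"] hnorm_nonneg[of "u (1/2)"] by (auto intro!: power_mono)
    finally show ?thesis .
  qed
  also have "integral\<^sup>L (lebesgue_on {1/2..1}) (\<lambda>\<tau>. \<Sum>j<n. Gj j \<tau>)
      \<le> integral\<^sup>L (lebesgue_on {1/2..1}) (\<lambda>\<tau>. M2 * (1 - \<tau>) powr (- \<beta>))"
  proof (rule integral_mono)
    show "integrable (lebesgue_on {1/2..1}) (\<lambda>\<tau>. \<Sum>j<n. Gj j \<tau>)" using PJ by simp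
    show "integrable (lebesgue_on {1/2..1}) (\<lambda>\<tau>. M2 * (1 - \<tau>) powr (- \<beta>))"
      using lint_powr(1)[OF \<beta>(1,2)] by simp
    fix \<tau> :: real assume "\<tau> \<in> space (lebesgue_on {1/2..1})"
    then have t: "\<tau> \<in> {1/2..1}" by simp
    show "(\<Sum>j<n. Gj j \<tau>) \<le> M2 * (1 - \<tau>) powr (- \<beta>)"
    proof (cases "\<tau> \<in> N")
      case True then show ?thesis using M2 by (simp add: Gj_def \<rho>_def)
    next
      case False
      then have "\<tau> \<noteq> 1" by (auto simp: N_def)
      then have x: "0 < 1 - \<tau>" using t by auto
      have "(\<Sum>j<n. Gj j \<tau>) \<le> (\<Sum>j<n. (1 - \<tau>) powr (- \<beta>) * (\<rho> j \<tau>)\<^sup>2)"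
      proof (rule sum_mono)
        fix j assume "j \<in> {..<n}"
        have "lam j powr \<beta> * exp (- (lam j * (1 - \<tau>))) \<le> (1 - \<tau>) powr (- \<beta>)"
          by (rule powr_exp_bound[OF lam_pos x \<beta>(1) \<beta>(3)])
        then show "Gj j \<tau> \<le> (1 - \<tau>) powr (- \<beta>) * (\<rho> j \<tau>)\<^sup>2"
          unfolding Gj_def \<beta>_def by (intro mult_right_mono) auto
      qed
      also have "\<dots> = (1 - \<tau>) powr (- \<beta>) * (\<Sum>j<n. (\<rho> j \<tau>)\<^sup>2)" by (simp add: sum_distrib_left)
      also have "\<dots> \<le> (1 - \<tau>) powr (- \<beta>) * M2" using \<rho>sum[OF t] by (intro mult_left_mono) auto
      finally show ?thesis by (simp add: mult.commute)
    qed
  qed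
  also have "integral\<^sup>L (lebesgue_on {1/2..1}) (\<lambda>\<tau>. M2 * (1 - \<tau>) powr (- \<beta>))
        = M2 * ((1/2) powr (1 - \<beta>) / (1 - \<beta>))"
    using lint_powr(2)[OF \<beta>(1,2)] by simp
  also have "1 - \<beta> = 2 - 2 * rr" by (simp add: \<beta>_def)
  finally show ?thesis by (simp add: M2_def)
qed

lemma hdist_self: "hdist f f = 0"
  by (simp add: hdist_def hnorm_def)

lemma hnorm_tri_sq:
  assumes f: "inH f" and a: "inH a"
  shows "(hnorm f)\<^sup>2 \<le> 2 * (hdist f a)\<^sup>2 + 2 * (hnorm a)\<^sup>2"
proof -
  have "(hnorm f)\<^sup>2 = integral\<^sup>L M01 (\<lambda>x. (f x)\<^sup>2)" by (rule hnorm_sq)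
  also have "\<dots> \<le> integral\<^sup>L M01 (\<lambda>x. 2 * (f x - a x)\<^sup>2 + 2 * (a x)\<^sup>2)"
  proof (rule integral_mono)
    show "integrable M01 (\<lambda>x. (f x)\<^sup>2)" using inH_sq[OF f] .
    show "integrable M01 (\<lambda>x. 2 * (f x - a x)\<^sup>2 + 2 * (a x)\<^sup>2)"
      using inH_sq[OF inH_diff[OF f a]] inH_sq[OF a] by simp
    fix x
    have "0 \<le> (f x - 2 * a x)\<^sup>2" by simp
    then show "(f x)\<^sup>2 \<le> 2 * (f x - a x)\<^sup>2 + 2 * (a x)\<^sup>2"
      by (simp add: power2_eq_square algebra_simps)
  qed
  also have "\<dots> = 2 * integral\<^sup>L M01 (\<lambda>x. (f x - a x)\<^sup>2) + 2 * integral\<^sup>L M01 (\<lambda>x. (a x)\<^sup>2)"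
    using inH_sq[OF inH_diff[OF f a]] inH_sq[OF a] by simp
  also have "\<dots> = 2 * (hdist f a)\<^sup>2 + 2 * (hnorm a)\<^sup>2"
    by (simp add: hdist_def hnorm_sq)
  finally show ?thesis .
qed

lemma K_bounded:
  assumes HK: "Hcompact K"
  shows "\<exists>R\<ge>0. \<forall>f\<in>K. hnorm f \<le> R"
proof (rule ccontr)
  assume "\<not> (\<exists>R\<ge>0. \<forall>f\<in>K. hnorm f \<le> R)"
  then have "\<forall>n::nat. \<exists>f\<in>K. hnorm f > real n"
    by (metis linorder_not_le of_nat_0_le_iff)
  then obtain s where s: "\<And>n. s n \<in> K" "\<And>n. hnorm (s n) > real n" by metis
  obtain a \<sigma> where a: "a \<in> K" and \<sigma>: "strict_mono \<sigma>" and lim: "(\<lambda>n. hdist (s (\<sigma> n)) a) \<longlonglongrightarrow> 0"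
    using HK s(1) unfolding Hcompact_def by blast
  have inK: "\<And>f. f \<in> K \<Longrightarrow> inH f" using HK by (simp add: Hcompact_def)
  have "eventually (\<lambda>n. hdist (s (\<sigma> n)) a < 1) sequentially"
    using lim by (rule order_tendstoD) simp
  then obtain N where N: "\<And>n. n \<ge> N \<Longrightarrow> hdist (s (\<sigma> n)) a < 1"
    by (auto simp: eventually_sequentially)
  define M where "M = 2 + 2 * (hnorm a)\<^sup>2"
  obtain n where n: "n \<ge> N" "real n > M" using reals_Archimedean2[of M]
    by (metis le_cases less_le_trans of_nat_le_iff)
  have "(hnorm (s (\<sigma> n)))\<^sup>2 \<le> 2 * (hdist (s (\<sigma> n)) a)\<^sup>2 + 2 * (hnorm a)\<^sup>2"
    by (rule hnorm_tri_sq[OF inK[OF s(1)] inK[OF a]])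
  also have "(hdist (s (\<sigma> n)) a)\<^sup>2 \<le> 1"
  proof -
    have "0 \<le> hdist (s (\<sigma> n)) a" by (simp add: hdist_def hnorm_nonneg)
    then show ?thesis using N[OF n(1)] by (simp add: abs_square_le_1)
  qed
  finally have h1: "(hnorm (s (\<sigma> n)))\<^sup>2 \<le> M" by (simp add: M_def)
  have "real n \<le> real (\<sigma> n)" using seq_suble[OF \<sigma>, of n] by simp
  also have "\<dots> < hnorm (s (\<sigma> n))" by (rule s(2))
  finally have h2: "real n < hnorm (s (\<sigma> n))" .
  have "M \<ge> 1" by (simp add: M_def)
  then have "real n \<ge> 1" using n(2) by simp
  then have "real n \<le> real n ^ 2" by (simp add: power2_eq_square)
  also have "real n ^ 2 < (hnorm (s (\<sigma> n)))\<^sup>2"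
    using h2 by (intro power_strict_mono) auto
  finally show False using h1 n(2) by simp
qed

lemma lam_ge_real: "real j \<le> lam j"
proof -
  have "real (Suc j) * 1 \<le> real (Suc j) * pi" using pi_gt3 by (intro mult_left_mono) auto
  then have a: "real (Suc j) \<le> real (Suc j) * pi" by simp
  have "1 \<le> real (Suc j)" by simp
  then have "1 \<le> real (Suc j) * pi" using a by linarith
  then have "real (Suc j) * pi \<le> (real (Suc j) * pi)\<^sup>2" by (simp add: power2_eq_square)
  moreover have "real j \<le> real (Suc j)" by simp
  ultimately show ?thesis using a unfolding lam_def by linarith
qed

lemma lam_mono: "j \<le> k \<Longrightarrow> lam j \<le> lam k"
  unfolding lam_def by (intro power_mono mult_right_mono) auto

lemma lam_at_top: "filterlim lam at_top sequentially"
  by (rule filterlim_at_top_mono[OF filterlim_real_sequentially]) (simp add: lam_ge_real)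

lemma conv_part:
  fixes s :: "nat \<Rightarrow> real \<Rightarrow> real"
  assumes ins: "\<And>n. inH (s n)" and ina: "inH a"
    and bs: "\<And>n N. (\<Sum>j<N. lam j powr (2*rr) * (coef (s n) j)\<^sup>2) \<le> C"
    and ba: "\<And>N. (\<Sum>j<N. lam j powr (2*rr) * (coef a j)\<^sup>2) \<le> C"
    and lim: "(\<lambda>n. hdist (s n) a) \<longlonglongrightarrow> 0"
    and r: "0 \<le> r" "r < rr"
  shows "(\<lambda>n. Arnorm r (\<lambda>x. s n x - a x)) \<longlonglongrightarrow> 0"
proof -
  define d where "d n j = coef (s n) j - coef a j" for n j
  have cd: "coef (\<lambda>x. s n x - a x) j = d n j" for n j
    by (simp add: d_def coef_diff[OF ins ina])
  define F where "F n j = lam j powr (2*r) * (d n j)\<^sup>2" for n j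
  define G where "G n j = lam j powr (2*rr) * (d n j)\<^sup>2" for n j
  have C0: "0 \<le> C" using ba[of 0] by simp
  have F0: "0 \<le> F n j" for n j by (simp add: F_def)
  have Gb: "(\<Sum>j<N. G n j) \<le> 4 * C" for n N
  proof -
    have "(\<Sum>j<N. G n j) \<le> (\<Sum>j<N. 2 * (lam j powr (2*rr) * (coef (s n) j)\<^sup>2) + 2 * (lam j powr (2*rr) * (coef a j)\<^sup>2))"
    proof (rule sum_mono)
      fix j
      have "(d n j)\<^sup>2 \<le> 2 * (coef (s n) j)\<^sup>2 + 2 * (coef a j)\<^sup>2"
      proof -
        have "0 \<le> (coef (s n) j + coef a j)\<^sup>2" by simp
        then show ?thesis by (simp add: d_def power2_eq_square algebra_simps)
      qed
      then have "lam j powr (2*rr) * (d n j)\<^sup>2 \<le> lam j powr (2*rr) * (2 * (coef (s n) j)\<^sup>2 + 2 * (coef a j)\<^sup>2)"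
        by (intro mult_left_mono) auto
      then show "G n j \<le> 2 * (lam j powr (2*rr) * (coef (s n) j)\<^sup>2) + 2 * (lam j powr (2*rr) * (coef a j)\<^sup>2)"
        by (simp add: G_def algebra_simps)
    qed
    also have "\<dots> = 2 * (\<Sum>j<N. lam j powr (2*rr) * (coef (s n) j)\<^sup>2) + 2 * (\<Sum>j<N. lam j powr (2*rr) * (coef a j)\<^sup>2)"
      by (simp add: sum.distrib sum_distrib_left)
    also have "\<dots> \<le> 2 * C + 2 * C" using bs[of n N] ba[of N] by linarith
    finally show ?thesis by simp
  qed
  have FG: "F n j \<le> G n j" for n j
  proof -
    have "lam j powr (2*r) \<le> lam j powr (2*rr)" using lam_ge1[of j] r by (intro powr_mono) auto
    then show ?thesis unfolding F_def G_def by (intro mult_right_mono) auto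
  qed
  have sF: "summable (F n)" for n
  proof (rule summableI_nonneg_bounded[where x="4*C"])
    fix j show "0 \<le> F n j" by (rule F0)
  next
    fix N
    have "(\<Sum>j<N. F n j) \<le> (\<Sum>j<N. G n j)" by (intro sum_mono FG)
    also have "\<dots> \<le> 4 * C" by (rule Gb)
    finally show "(\<Sum>j<N. F n j) \<le> 4 * C" .
  qed
  have Ar: "Arnorm r (\<lambda>x. s n x - a x) = sqrt (suminf (F n))" for n
    by (simp add: Arnorm_def cd F_def[abs_def])
  define \<delta> where "\<delta> = 2*rr - 2*r"
  have \<delta>: "\<delta> > 0" using r by (simp add: \<delta>_def)
  have key: "eventually (\<lambda>n. suminf (F n) \<le> e) sequentially" if e: "e > 0" for e
  proof -
    have "(\<lambda>J. lam J powr (- \<delta>)) \<longlonglongrightarrow> 0"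
      by (rule tendsto_neg_powr[OF _ lam_at_top]) (use \<delta> in simp)
    moreover have "e / (2 * (4 * C + 1)) > 0" using e C0 by simp
    ultimately have "eventually (\<lambda>J. lam J powr (- \<delta>) < e / (2 * (4 * C + 1))) sequentially"
      by (rule order_tendstoD)
    then obtain J where J: "lam J powr (- \<delta>) < e / (2 * (4 * C + 1))"
      by (auto simp: eventually_sequentially)
    have tail: "lam J powr (- \<delta>) * (4 * C) \<le> e / 2"
    proof -
      have "lam J powr (- \<delta>) * (4 * C) \<le> e / (2 * (4 * C + 1)) * (4 * C)"
        using J C0 by (intro mult_right_mono) auto
      also have "\<dots> \<le> e / 2"
        using e C0 by (simp add: field_simps)
      finally show ?thesis .
    qed
    have Fj: "F n j \<le> lam J powr (- \<delta>) * G n j" if "J \<le> j" for n j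
    proof -
      have "lam j powr (2*r) = lam j powr (2*rr) * lam j powr (- \<delta>)"
        by (simp add: \<delta>_def powr_add[symmetric])
      also have "\<dots> \<le> lam j powr (2*rr) * lam J powr (- \<delta>)"
        using \<delta> lam_pos[of J] lam_mono[OF that] by (intro mult_left_mono powr_mono2') auto
      finally have "lam j powr (2*r) \<le> lam j powr (2*rr) * lam J powr (- \<delta>)" .
      then have "lam j powr (2*r) * (d n j)\<^sup>2 \<le> (lam j powr (2*rr) * lam J powr (- \<delta>)) * (d n j)\<^sup>2"
        by (rule mult_right_mono) simp
      then show ?thesis unfolding F_def G_def by (simp add: algebra_simps)
    qed
    have hd: "(\<lambda>n. \<Sum>j<J. F n j) \<longlonglongrightarrow> 0"
    proof -
      have dj: "(\<lambda>n. d n j) \<longlonglongrightarrow> 0" for j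
      proof -
        have l2: "(\<lambda>n. sqrt 2 * hdist (s n) a) \<longlonglongrightarrow> 0"
          using tendsto_mult[OF tendsto_const lim, of "sqrt 2"] by simp
        have nb: "norm (d n j) \<le> sqrt 2 * hdist (s n) a" for n
          using coef_abs_le[OF ins[of n] ina, of j] by (simp add: d_def)
        have ev: "eventually (\<lambda>n. norm (d n j) \<le> sqrt 2 * hdist (s n) a) sequentially"
          using nb by (rule always_eventually[OF allI])
        show ?thesis by (rule Lim_null_comparison[OF ev l2])
      qed
      have "(\<lambda>n. \<Sum>j<J. F n j) \<longlonglongrightarrow> (\<Sum>j<J. lam j powr (2*r) * 0\<^sup>2)"
        unfolding F_def by (intro tendsto_sum tendsto_mult tendsto_const tendsto_power dj)
      then show ?thesis by simp
    qed
    have "eventually (\<lambda>n. (\<Sum>j<J. F n j) < e / 2) sequentially"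
      using hd by (rule order_tendstoD) (use e in simp)
    then show ?thesis
    proof (rule eventually_mono)
      fix n assume hn: "(\<Sum>j<J. F n j) < e / 2"
      show "suminf (F n) \<le> e"
      proof (rule suminf_le_const[OF sF])
        fix N
        have "(\<Sum>j<N. F n j) \<le> (\<Sum>j<N. (if j < J then F n j else 0) + lam J powr (- \<delta>) * G n j)"
        proof (rule sum_mono)
          fix j
          have "0 \<le> lam J powr (- \<delta>) * G n j" by (simp add: G_def)
          then show "F n j \<le> (if j < J then F n j else 0) + lam J powr (- \<delta>) * G n j"
            using Fj[of j n] by (cases "j < J") auto
        qed
        also have "\<dots> = (\<Sum>j<N. if j < J then F n j else 0) + lam J powr (- \<delta>) * (\<Sum>j<N. G n j)"
          by (simp add: sum.distrib sum_distrib_left)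
        also have "(\<Sum>j<N. if j < J then F n j else 0) \<le> (\<Sum>j<J. F n j)"
        proof -
          have "(\<Sum>j<N. if j < J then F n j else 0) = (\<Sum>j\<in>{..<N} \<inter> {..<J}. F n j)"
            by (simp add: sum.inter_restrict)
          also have "\<dots> \<le> (\<Sum>j<J. F n j)" using F0 by (intro sum_mono2) auto
          finally show ?thesis .
        qed
        also have "lam J powr (- \<delta>) * (\<Sum>j<N. G n j) \<le> lam J powr (- \<delta>) * (4 * C)"
          using Gb by (intro mult_left_mono) auto
        finally show "(\<Sum>j<N. F n j) \<le> e" using hn tail by linarith
      qed
    qed
  qed
  show ?thesis
  proof (rule LIMSEQ_I)
    fix e :: real assume e: "e > 0"
    have "eventually (\<lambda>n. suminf (F n) \<le> (e/2)\<^sup>2) sequentially" using e by (intro key) simp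
    then obtain M where M: "\<And>n. n \<ge> M \<Longrightarrow> suminf (F n) \<le> (e/2)\<^sup>2"
      by (auto simp: eventually_sequentially)
    show "\<exists>no. \<forall>n\<ge>no. norm (Arnorm r (\<lambda>x. s n x - a x) - 0) < e"
    proof (intro exI allI impI)
      fix n assume "n \<ge> M"
      then have "sqrt (suminf (F n)) \<le> sqrt ((e/2)\<^sup>2)" using M by (intro real_sqrt_le_mono) auto
      also have "\<dots> = e/2" using e by simp
      finally have "sqrt (suminf (F n)) \<le> e / 2" .
      moreover have "0 \<le> suminf (F n)" using sF F0 by (intro suminf_nonneg) auto
      ultimately show "norm (Arnorm r (\<lambda>x. s n x - a x) - 0) < e" using e by (simp add: Ar)
    qed
  qed
qed

theorem lemma8:
  fixes b \<omega> :: real and Att :: "(real \<Rightarrow> real) set"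
  assumes "b > 0" and "0 \<le> \<omega>" and "\<omega> < pi\<^sup>2"
    and "global_attractor b \<omega> Att"
  shows "\<forall>r. 0 \<le> r \<and> r < 1 \<longrightarrow> Vcompact r Att"
proof (intro allI impI)
  fix r :: real assume r: "0 \<le> r \<and> r < 1"
  have HK: "Hcompact Att" and inv: "\<And>t. t \<ge> 0 \<Longrightarrow> Gset b \<omega> t Att = Att"
    using assms(4) unfolding global_attractor_def by auto
  have inK: "\<And>f. f \<in> Att \<Longrightarrow> inH f" using HK by (simp add: Hcompact_def)
  obtain R where R: "0 \<le> R" "\<And>f. f \<in> Att \<Longrightarrow> hnorm f \<le> R"
    using K_bounded[OF HK] by blast
  define rr where "rr = (1 + r) / 2"
  have rr: "1/2 \<le> rr" "rr < 1" "r < rr" using r by (auto simp: rr_def)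
  define C where "C = 8 * R\<^sup>2 + 2 * ((2*b\<^sup>2 + 2*\<omega>\<^sup>2*R\<^sup>2) * ((1/2) powr (2 - 2*rr) / (2 - 2*rr)))"
  have Kb: "(\<Sum>j<n. lam j powr (2*rr) * (coef v j)\<^sup>2) \<le> C" if v: "v \<in> Att" for v n
  proof -
    have "v \<in> Gset b \<omega> 1 Att" using inv[of 1] v by simp
    then obtain u0 u where u0: "u0 \<in> Att" and sol: "solP b \<omega> u0 u" and vu: "hdist v (u 1) = 0"
      unfolding Gset_def Gmap_def by blast
    have hc: "hcont u" using sol by (simp add: solP_def)
    have iu: "\<And>t. t \<ge> 0 \<Longrightarrow> inH (u t)" using hc by (simp add: hcont_def)
    have uK: "u \<tau> \<in> Att" if "\<tau> \<ge> 0" for \<tau>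
    proof -
      have "u \<tau> \<in> Gmap b \<omega> \<tau> u0"
        unfolding Gmap_def using iu[OF that] sol hdist_self by blast
      then have "u \<tau> \<in> Gset b \<omega> \<tau> Att" using u0 unfolding Gset_def by blast
      then show ?thesis using inv[OF that] by simp
    qed
    have bnd: "hnorm (u \<tau>) \<le> R" if "\<tau> \<in> {0..1}" for \<tau>
      using R(2)[OF uK] that by simp
    have cv: "coef v j = coef (u 1) j" for j
      using coef_hdist0[OF inK[OF v] iu vu] by simp
    have "(\<Sum>j<n. lam j powr (2*rr) * (coef (u 1) j)\<^sup>2) \<le> C"
      unfolding C_def
      by (rule sol_est[OF sol _ assms(2) R(1) bnd rr(1) rr(2)]) (use assms(1) in simp)
    then show ?thesis by (simp add: cv)
  qed
  have inDA: "inDA r f" if f: "f \<in> Att" for f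
    unfolding inDA_def
  proof
    show "inH f" using inK[OF f] .
    show "summable (\<lambda>j. lam j powr (2 * r) * (coef f j)\<^sup>2)"
    proof (rule summableI_nonneg_bounded[where x=C])
      fix j show "0 \<le> lam j powr (2 * r) * (coef f j)\<^sup>2" by simp
    next
      fix n
      have "(\<Sum>j<n. lam j powr (2 * r) * (coef f j)\<^sup>2) \<le> (\<Sum>j<n. lam j powr (2*rr) * (coef f j)\<^sup>2)"
      proof (rule sum_mono)
        fix j
        have "lam j powr (2 * r) \<le> lam j powr (2 * rr)" using lam_ge1[of j] rr by (intro powr_mono) auto
        then show "lam j powr (2 * r) * (coef f j)\<^sup>2 \<le> lam j powr (2 * rr) * (coef f j)\<^sup>2"
          by (rule mult_right_mono) simp
      qed
      also have "\<dots> \<le> C" by (rule Kb[OF f])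
      finally show "(\<Sum>j<n. lam j powr (2 * r) * (coef f j)\<^sup>2) \<le> C" .
    qed
  qed
  show "Vcompact r Att"
    unfolding Vcompact_def
  proof (intro conjI ballI allI impI)
    fix f assume "f \<in> Att" then show "inDA r f" by (rule inDA)
  next
    fix s :: "nat \<Rightarrow> real \<Rightarrow> real" assume s: "\<forall>n. s n \<in> Att"
    obtain a \<sigma> where a: "a \<in> Att" and \<sigma>: "strict_mono \<sigma>" and lim: "(\<lambda>n. hdist (s (\<sigma> n)) a) \<longlonglongrightarrow> 0"
      using HK s unfolding Hcompact_def by blast
    have "(\<lambda>n. Arnorm r (\<lambda>x. s (\<sigma> n) x - a x)) \<longlonglongrightarrow> 0"
    proof (rule conv_part[where s="\<lambda>n. s (\<sigma> n)" and C=C and rr=rr])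
      show "\<And>n. inH (s (\<sigma> n))" using s inK by blast
      show "inH a" using inK[OF a] .
      show "\<And>n N. (\<Sum>j<N. lam j powr (2 * rr) * (coef (s (\<sigma> n)) j)\<^sup>2) \<le> C" using Kb s by blast
      show "\<And>N. (\<Sum>j<N. lam j powr (2 * rr) * (coef a j)\<^sup>2) \<le> C" using Kb a by blast
      show "(\<lambda>n. hdist (s (\<sigma> n)) a) \<longlonglongrightarrow> 0" by (rule lim)
      show "0 \<le> r" "r < rr" using r rr by auto
    qed
    then show "\<exists>a\<in>Att. \<exists>\<sigma>. strict_mono \<sigma> \<and> (\<lambda>n. Arnorm r (\<lambda>x. s (\<sigma> n) x - a x)) \<longlonglongrightarrow> 0"
      using a \<sigma> by blast
  qed
qed

end
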